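(* Under the standing setup (C1)–(C4), there is a constant $\hat C>0$ such that whenever $N\ge n>m\ge[N^{1-\gamma}]\ge n_0$, $$\Big|E\Big(\sum_{k=m+1}^nR(k)\Big)^2-(n-m)\sigma^2\Big|\le\hat C,$$ where $R(k)=\prod_{j=1}^\ell X_j(q_j(k))-\prod_{j=1}^\ell a_j$ and $\sigma^2=EX_1^2(0)\big(\prod_{j=2}^\ell EX_j^2(0)-\prod_{j=2}^\ell a_j^2\big)+\sigma_1^2\prod_{j=2}^\ell a_j^2$ with $\sigma_1^2=EX_1^2(0)-a_1^2+2\sum_{n=1}^\infty E\big((X_1(rn)-a_1)(X_1(0)-a_1)\big)$.
   Context: Standing setup. $(\Omega,\mathcal F,P)$ is a probability space, $\ell\ge1$, $X_1,\dots,X_\ell$ are real stationary processes $X_j(n)$, $n\ge0$, with $|X_j(n)|\le D$ a.s. $\{\mathcal F_{kl}\}$ is a family of sub-$\sigma$-algebras, $\mathcal F_{kl}\subset\mathcal F_{k'l'}$ for $k'\le k$, $l'\ge l$. $\alpha(n)=\sup_{k\ge0}\sup_{A\in\mathcal F_{-\infty,k},B\in\mathcal F_{k+n,\infty}}|P(A\cap B)-P(A)P(B)|$, $\beta_j(n)=\sup_{m\ge0}E|X_j(m)-E(X_j(m)\mid\mathcal F_{m-n,m+n})|$. (C1): $\alpha(n)+\max_j\beta_j(n)\le\kappa^{-1}e^{-\kappa n}$ for some $\kappa>0$ and all $n$. (C2): $q_1(n)=rn+p$ with integers $r>0,p\ge0$. There exist $\gamma\in(0,1)$, $n_0>1$ such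 that for $n\ge n_0$: (C3) $q_j(n+1)\ge q_j(n)+n^\gamma$ for $j=2,\dots,\ell$; (C4) $q_{j+1}([n^{1-\gamma}])\ge q_j(n)n^\gamma$ for $j=1,\dots,\ell-1$. All $q_j$ take nonnegative integer values on nonnegative integers. $a_j=EX_j(0)$; empty products equal 1. *)

theory Defs
  imports "HOL-Probability.Probability"
begin

definition stationary_proc :: "'a measure \<Rightarrow> (nat \<Rightarrow> 'a \<Rightarrow> real) \<Rightarrow> bool" where
  "stationary_proc M Y \<longleftrightarrow>
     (\<forall>s::nat. \<forall>I::nat set. finite I \<longrightarrow>
        distr M (PiM I (\<lambda>_. borel)) (\<lambda>\<omega>. \<lambda>i\<in>I. Y (i + s) \<omega>)
      = distr M (PiM I (\<lambda>_. borel)) (\<lambda>\<omega>. \<lambda>i\<in>I. Y i \<omega>))"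

definition alpha_mix :: "'a measure \<Rightarrow> (ereal \<Rightarrow> ereal \<Rightarrow> 'a measure) \<Rightarrow> nat \<Rightarrow> real" where
  "alpha_mix M F n = Sup {\<bar>measure M (A \<inter> B) - measure M A * measure M B\<bar> | k A B.
       A \<in> sets (F (-\<infinity>) (ereal (real k))) \<and> B \<in> sets (F (ereal (real (k + n))) \<infinity>)}"

definition beta_approx :: "'a measure \<Rightarrow> (ereal \<Rightarrow> ereal \<Rightarrow> 'a measure) \<Rightarrow> (nat \<Rightarrow> 'a \<Rightarrow> real) \<Rightarrow> nat \<Rightarrow> real" where
  "beta_approx M F Y n = Sup {(\<integral>\<omega>. \<bar>Y m \<omega> - real_cond_exp M (F (ereal (real_of_int (int m - int n))) (ereal (real (m + n)))) (Y m) \<omega>\<bar> \<partial>M) | m. True}"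

definition mean0 :: "'a measure \<Rightarrow> (nat \<Rightarrow> nat \<Rightarrow> 'a \<Rightarrow> real) \<Rightarrow> nat \<Rightarrow> real" where
  "mean0 M X j = (\<integral>\<omega>. X j 0 \<omega> \<partial>M)"

definition Rproc :: "'a measure \<Rightarrow> nat \<Rightarrow> (nat \<Rightarrow> nat \<Rightarrow> 'a \<Rightarrow> real) \<Rightarrow> (nat \<Rightarrow> nat \<Rightarrow> nat) \<Rightarrow> nat \<Rightarrow> 'a \<Rightarrow> real" where
  "Rproc M L X q k \<omega> = (\<Prod>j=1..L. X j (q j k) \<omega>) - (\<Prod>j=1..L. mean0 M X j)"

definition sigma1sq :: "'a measure \<Rightarrow> (nat \<Rightarrow> nat \<Rightarrow> 'a \<Rightarrow> real) \<Rightarrow> nat \<Rightarrow> real" where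
  "sigma1sq M X r = (\<integral>\<omega>. (X 1 0 \<omega>)\<^sup>2 \<partial>M) - (mean0 M X 1)\<^sup>2
     + 2 * (\<Sum>n. \<integral>\<omega>. (X 1 (r * Suc n) \<omega> - mean0 M X 1) * (X 1 0 \<omega> - mean0 M X 1) \<partial>M)"

definition sigmasq :: "'a measure \<Rightarrow> nat \<Rightarrow> (nat \<Rightarrow> nat \<Rightarrow> 'a \<Rightarrow> real) \<Rightarrow> nat \<Rightarrow> real" where
  "sigmasq M L X r = (\<integral>\<omega>. (X 1 0 \<omega>)\<^sup>2 \<partial>M)
       * ((\<Prod>j=2..L. \<integral>\<omega>. (X j 0 \<omega>)\<^sup>2 \<partial>M) - (\<Prod>j=2..L. (mean0 M X j)\<^sup>2))
     + sigma1sq M X r * (\<Prod>j=2..L. (mean0 M X j)\<^sup>2)"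

end

theory Submission
  imports Defs "HOL-Real_Asymp.Real_Asymp"
begin

lemma sfs_of_subalg:
  assumes "prob_space M" "subalgebra M G"
  shows "sigma_finite_subalgebra M G"
  apply (rule finite_measure_subalgebra_is_sigma_finite)
  using assms unfolding finite_measure_subalgebra_def finite_measure_subalgebra_axioms_def
  by (simp add: prob_space.finite_measure)

lemma bounded_integrable:
  fixes f :: "_ \<Rightarrow> real" assumes "prob_space M" "f \<in> borel_measurable M" "AE x in M. \<bar>f x\<bar> \<le> c"
  shows "integrable M f"
  using assms finite_measure.integrable_const_bound[of M f c] prob_space.finite_measure
  by fastforce

lemma cond_exp_bounded:
  fixes f :: "_ \<Rightarrow> real" assumes "prob_space M" "subalgebra M G" "f \<in> borel_measurable M" "AE x in M. \<bar>f x\<bar> \<le> c"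
  shows "AE x in M. \<bar>real_cond_exp M G f x\<bar> \<le> c"
proof -
  interpret sigma_finite_subalgebra M G using sfs_of_subalg assms by blast
  have i: "integrable M f" using bounded_integrable assms by blast
  have "AE x in M. real_cond_exp M G f x \<le> c"
    by (rule real_cond_exp_le_c) (use i assms(4) in auto)
  moreover have "AE x in M. real_cond_exp M G f x \<ge> -c"
    by (rule real_cond_exp_ge_c) (use i assms(4) in auto)
  ultimately show ?thesis by eventually_elim auto
qed

lemma prob_AE_bound_nonneg:
  fixes f :: "_ \<Rightarrow> real" assumes "prob_space M" "AE x in M. \<bar>f x\<bar> \<le> c" shows "c \<ge> 0"
proof (rule ccontr)
  assume "\<not> c \<ge> 0"
  then have "AE x in M. False" using assms(2) by (auto elim: AE_mp)
  then show False using assms(1) prob_space.AE_False by blast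
qed

locale L35 =
  fixes M :: "'a measure"
    and L :: nat
    and X :: "nat \<Rightarrow> nat \<Rightarrow> 'a \<Rightarrow> real"
    and q :: "nat \<Rightarrow> nat \<Rightarrow> nat"
    and F :: "ereal \<Rightarrow> ereal \<Rightarrow> 'a measure"
    and D \<kappa> \<gamma> :: real
    and r p n\<^sub>0 :: nat
  assumes prob: "prob_space M"
    and l_pos: "L \<ge> 1"
    and X_meas: "\<And>j n. j \<in> {1..L} \<Longrightarrow> X j n \<in> borel_measurable M"
    and X_stat: "\<And>j. j \<in> {1..L} \<Longrightarrow> stationary_proc M (X j)"
    and X_bdd: "\<And>j n. j \<in> {1..L} \<Longrightarrow> AE \<omega> in M. \<bar>X j n \<omega>\<bar> \<le> D"
    and F_sub: "\<And>k l. subalgebra M (F k l)"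
    and F_mono: "\<And>k l k' l'. k' \<le> k \<Longrightarrow> l \<le> l' \<Longrightarrow> sets (F k l) \<subseteq> sets (F k' l')"
    and C1: "\<kappa> > 0" "\<And>n. alpha_mix M F n + Max ((\<lambda>j. beta_approx M F (X j) n) ` {1..L})
                              \<le> exp (- \<kappa> * real n) / \<kappa>"
    and C2: "r > 0" "\<And>n. q 1 n = r * n + p"
    and gamma: "0 < \<gamma>" "\<gamma> < 1" and n0: "n\<^sub>0 > 1"
    and C3: "\<And>j n. j \<in> {2..L} \<Longrightarrow> n \<ge> n\<^sub>0 \<Longrightarrow>
               real (q j (n + 1)) \<ge> real (q j n) + real n powr \<gamma>"
    and C4: "\<And>j n. j \<in> {1..<L} \<Longrightarrow> n \<ge> n\<^sub>0 \<Longrightarrow>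
               real (q (j + 1) (nat \<lfloor>real n powr (1 - \<gamma>)\<rfloor>)) \<ge> real (q j n) * real n powr \<gamma>"
begin

interpretation P: prob_space M by (rule prob)

definition "B = \<bar>D\<bar> + 1"

lemma B_ge1: "B \<ge> 1" unfolding B_def by simp

lemma Xb: "j \<in> {1..L} \<Longrightarrow> AE \<omega> in M. \<bar>X j n \<omega>\<bar> \<le> B"
  using X_bdd[of j n] unfolding B_def by (auto elim: AE_mp)

lemma Xint: "j \<in> {1..L} \<Longrightarrow> integrable M (X j n)"
  using bounded_integrable[OF prob X_meas Xb] by blast

lemma sub_sets: "sets (F a b) \<subseteq> sets M" "space (F a b) = space M"
  using F_sub[of a b] unfolding subalgebra_def by auto

definition "alset n = {\<bar>measure M (A \<inter> C) - measure M A * measure M C\<bar> | k A C.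
       A \<in> sets (F (-\<infinity>) (ereal (real k))) \<and> C \<in> sets (F (ereal (real (k + n))) \<infinity>)}"

lemma alset_bdd: "bdd_above (alset n)"
proof -
  have "x \<le> 1" if xin: "x \<in> alset n" for x
  proof -
    obtain A C where x: "x = \<bar>measure M (A \<inter> C) - measure M A * measure M C\<bar>"
      using xin unfolding alset_def by blast
    have "measure M (A \<inter> C) \<le> 1" "measure M A \<le> 1" "measure M C \<le> 1"
      by (simp_all add: P.prob_le_1)
    moreover have "measure M (A \<inter> C) \<ge> 0" "measure M A \<ge> 0" "measure M C \<ge> 0" by auto
    ultimately have "measure M A * measure M C \<le> 1" "measure M A * measure M C \<ge> 0"
      by (simp_all add: mult_le_one)
    then show ?thesis unfolding x using \<open>measure M (A \<inter> C) \<le> 1\<close> \<open>measure M (A \<inter> C) \<ge> 0\<close> by linarith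
  qed
  then show ?thesis by (rule bdd_aboveI)
qed

lemma alpha_upper:
  assumes "A \<in> sets (F (-\<infinity>) (ereal (real k)))" "C \<in> sets (F (ereal (real (k + n))) \<infinity>)"
  shows "\<bar>measure M (A \<inter> C) - measure M A * measure M C\<bar> \<le> alpha_mix M F n"
  unfolding alpha_mix_def
  apply (rule cSup_upper)
  using assms apply blast
  using alset_bdd unfolding alset_def by simp

lemma alpha_nonneg: "alpha_mix M F n \<ge> 0"
  using alpha_upper[where A="{}" and k=0 and C="{}" and n=n] by (simp add: sets.empty_sets)

definition "win t h = F (ereal (real_of_int (int t - int h))) (ereal (real (t + h)))"

lemma beta_upper:
  assumes j: "j \<in> {1..L}"
  shows "(\<integral>\<omega>. \<bar>X j t \<omega> - real_cond_exp M (win t h) (X j t) \<omega>\<bar> \<partial>M) \<le> beta_approx M F (X j) h"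
    "beta_approx M F (X j) h \<ge> 0"
proof -
  let ?S = "{(\<integral>\<omega>. \<bar>X j m \<omega> - real_cond_exp M (F (ereal (real_of_int (int m - int h))) (ereal (real (m + h)))) (X j m) \<omega>\<bar> \<partial>M) | m. True}"
  have bd: "x \<le> 2 * B" if "x \<in> ?S" for x
  proof -
    obtain m where x: "x = (\<integral>\<omega>. \<bar>X j m \<omega> - real_cond_exp M (F (ereal (real_of_int (int m - int h))) (ereal (real (m + h)))) (X j m) \<omega>\<bar> \<partial>M)"
      using \<open>x \<in> ?S\<close> by blast
    let ?Y = "real_cond_exp M (F (ereal (real_of_int (int m - int h))) (ereal (real (m + h)))) (X j m)"
    have Yb: "AE \<omega> in M. \<bar>?Y \<omega>\<bar> \<le> B"
      by (rule cond_exp_bounded[OF prob F_sub X_meas[OF j] Xb[OF j]])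
    have "AE \<omega> in M. \<bar>X j m \<omega> - ?Y \<omega>\<bar> \<le> 2 * B"
      using Yb Xb[OF j, of m] by eventually_elim (use B_ge1 in auto)
    then have "(\<integral>\<omega>. \<bar>X j m \<omega> - ?Y \<omega>\<bar> \<partial>M) \<le> (\<integral>\<omega>. 2 * B \<partial>M)"
      by (intro integral_mono_AE') (use B_ge1 in auto)
    then show ?thesis using x B_ge1 by (simp add: P.prob_space)
  qed
  have bdd: "bdd_above ?S" by (rule bdd_aboveI[where M="2*B"]) (rule bd)
  show "(\<integral>\<omega>. \<bar>X j t \<omega> - real_cond_exp M (win t h) (X j t) \<omega>\<bar> \<partial>M) \<le> beta_approx M F (X j) h"
    unfolding beta_approx_def win_def
    by (rule cSup_upper[OF _ bdd]) (rule CollectI, rule exI[where x=t], simp)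
  moreover have "(\<integral>\<omega>. \<bar>X j t \<omega> - real_cond_exp M (win t h) (X j t) \<omega>\<bar> \<partial>M) \<ge> 0"
    by (rule integral_nonneg_AE) simp
  ultimately show "beta_approx M F (X j) h \<ge> 0" by linarith
qed

lemma beta_le_max: "j \<in> {1..L} \<Longrightarrow> beta_approx M F (X j) h \<le> Max ((\<lambda>j. beta_approx M F (X j) h) ` {1..L})"
  by (rule Max_ge) auto

lemma beta_bound: "j \<in> {1..L} \<Longrightarrow> beta_approx M F (X j) h \<le> exp (- \<kappa> * real h) / \<kappa>"
  using beta_le_max[of j h] C1(2)[of h] alpha_nonneg[of h] by linarith

lemma alpha_bound: "alpha_mix M F h \<le> exp (- \<kappa> * real h) / \<kappa>"
proof -
  have "Max ((\<lambda>j. beta_approx M F (X j) h) ` {1..L}) \<ge> 0"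
  proof -
    have "1 \<in> {1..L}" using l_pos by simp
    then show ?thesis using beta_le_max[of 1 h] beta_upper(2)[of 1 h] by linarith
  qed
  then show ?thesis using C1(2)[of h] by linarith
qed

end

lemma sign_step:
  fixes V W :: "'a \<Rightarrow> real"
  assumes prob: "prob_space M" and G: "subalgebra M G"
    and Vm: "V \<in> borel_measurable G" and Vb: "AE x in M. \<bar>V x\<bar> \<le> b"
    and Wm: "W \<in> borel_measurable M" and Wb: "AE x in M. \<bar>W x\<bar> \<le> c"
  shows "\<bar>(\<integral>x. V x * W x \<partial>M) - (\<integral>x. V x \<partial>M) * (\<integral>x. W x \<partial>M)\<bar>
     \<le> b * ((\<integral>x. sgn (real_cond_exp M G W x - (\<integral>x. W x \<partial>M)) * W x \<partial>M)
         - (\<integral>x. sgn (real_cond_exp M G W x - (\<integral>x. W x \<partial>M)) \<partial>M) * (\<integral>x. W x \<partial>M))"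
proof -
  interpret P: prob_space M by (rule prob)
  interpret S: sigma_finite_subalgebra M G using sfs_of_subalg prob G by blast
  define Y where "Y = real_cond_exp M G W"
  define \<mu> where "\<mu> = (\<integral>x. W x \<partial>M)"
  define \<xi> where "\<xi> = (\<lambda>x. sgn (Y x - \<mu>))"
  have VmM: "V \<in> borel_measurable M" using Vm G by (rule measurable_from_subalg[rotated])
  have Ym: "Y \<in> borel_measurable G" "Y \<in> borel_measurable M" unfolding Y_def by simp_all
  have \<xi>m: "\<xi> \<in> borel_measurable G" unfolding \<xi>_def using Ym(1) by measurable
  have \<xi>mM: "\<xi> \<in> borel_measurable M" unfolding \<xi>_def using Ym(2) by measurable
  have b0: "b \<ge> 0" using prob_AE_bound_nonneg[OF prob Vb] .
  have c0: "c \<ge> 0" using prob_AE_bound_nonneg[OF prob Wb] .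
  have iV: "integrable M V" by (rule bounded_integrable[OF prob VmM Vb])
  have iW: "integrable M W" by (rule bounded_integrable[OF prob Wm Wb])
  have VWb: "AE x in M. \<bar>V x * W x\<bar> \<le> b * c"
    using Vb Wb by eventually_elim (simp add: abs_mult mult_mono b0 c0)
  have iVW: "integrable M (\<lambda>x. V x * W x)"
    by (rule bounded_integrable[OF prob _ VWb]) (use VmM Wm in measurable)
  have \<xi>b: "\<bar>\<xi> x\<bar> \<le> 1" for x unfolding \<xi>_def by (simp add: abs_sgn_eq)
  have i\<xi>: "integrable M \<xi>"
    by (rule bounded_integrable[OF prob \<xi>mM, where c=1]) (use \<xi>b in simp)
  have \<xi>Wb: "AE x in M. \<bar>\<xi> x * W x\<bar> \<le> c"
  proof -
    have *: "\<bar>\<xi> x * W x\<bar> \<le> \<bar>W x\<bar>" for x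
      unfolding abs_mult by (rule mult_left_le_one_le) (use \<xi>b in auto)
    from Wb show ?thesis by eventually_elim (rule order_trans[OF *])
  qed
  have i\<xi>W: "integrable M (\<lambda>x. \<xi> x * W x)"
    by (rule bounded_integrable[OF prob _ \<xi>Wb]) (use \<xi>mM Wm in measurable)
  have iY: "integrable M Y" and intY: "(\<integral>x. Y x \<partial>M) = \<mu>"
    unfolding Y_def \<mu>_def using S.real_cond_exp_int[OF iW] by auto
  have iVY: "integrable M (\<lambda>x. V x * Y x)" and intVY: "(\<integral>x. V x * Y x \<partial>M) = (\<integral>x. V x * W x \<partial>M)"
    unfolding Y_def using S.real_cond_exp_intg[OF iVW Vm Wm] by auto
  have i\<xi>Y: "integrable M (\<lambda>x. \<xi> x * Y x)" and int\<xi>Y: "(\<integral>x. \<xi> x * Y x \<partial>M) = (\<integral>x. \<xi> x * W x \<partial>M)"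
    unfolding Y_def using S.real_cond_exp_intg[OF i\<xi>W \<xi>m Wm] by auto
  have e1: "(\<integral>x. V x * W x \<partial>M) - (\<integral>x. V x \<partial>M) * \<mu> = (\<integral>x. V x * (Y x - \<mu>) \<partial>M)"
  proof -
    have "(\<integral>x. V x * (Y x - \<mu>) \<partial>M) = (\<integral>x. V x * Y x - \<mu> * V x \<partial>M)"
      by (simp add: algebra_simps)
    also have "\<dots> = (\<integral>x. V x * Y x \<partial>M) - \<mu> * (\<integral>x. V x \<partial>M)"
      using iVY iV by simp
    finally show ?thesis using intVY by simp
  qed
  have iVYm: "integrable M (\<lambda>x. V x * (Y x - \<mu>))"
    using iVY iV by (simp add: algebra_simps)
  have iYm: "integrable M (\<lambda>x. Y x - \<mu>)" using iY by simp
  have "\<bar>\<integral>x. V x * (Y x - \<mu>) \<partial>M\<bar> \<le> (\<integral>x. \<bar>V x * (Y x - \<mu>)\<bar> \<partial>M)"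
    by (rule integral_abs_bound)
  also have "\<dots> \<le> (\<integral>x. b * \<bar>Y x - \<mu>\<bar> \<partial>M)"
    by (rule integral_mono_AE') (use Vb in \<open>auto simp: abs_mult b0 intro!: mult_right_mono elim: AE_mp\<close>,
        use iYm in simp)
  also have "\<dots> = b * (\<integral>x. \<xi> x * (Y x - \<mu>) \<partial>M)"
  proof -
    have "\<And>x. \<bar>Y x - \<mu>\<bar> = sgn (Y x - \<mu>) * (Y x - \<mu>)" by (simp add: abs_sgn mult.commute)
    then show ?thesis unfolding \<xi>_def by simp
  qed
  also have "(\<integral>x. \<xi> x * (Y x - \<mu>) \<partial>M) = (\<integral>x. \<xi> x * Y x - \<mu> * \<xi> x \<partial>M)"
    by (simp add: algebra_simps)
  also have "\<dots> = (\<integral>x. \<xi> x * W x \<partial>M) - \<mu> * (\<integral>x. \<xi> x \<partial>M)"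
    using i\<xi>Y i\<xi> int\<xi>Y by simp
  finally show ?thesis using e1 unfolding \<xi>_def Y_def \<mu>_def by (simp add: mult.commute)
qed

lemma sgn_ind: "sgn (y::real) = indicator {x. 0 < y} u - indicator {x. y < 0} u"
  by (simp add: sgn_real_def indicator_def)

context L35
begin

interpretation P: prob_space M by (rule prob)

lemma int_ind: "A \<in> sets M \<Longrightarrow> integrable M (indicator A :: 'a \<Rightarrow> real)"
  using P.emeasure_finite[of A] by (simp add: integrable_indicator_iff Int_absorb2 sets.sets_into_space less_top[symmetric])

lemma ind_cov:
  assumes A: "A1 \<in> sets (F (-\<infinity>) (ereal (real k)))" "A2 \<in> sets (F (-\<infinity>) (ereal (real k)))"
    and C: "C1 \<in> sets (F (ereal (real (k + n))) \<infinity>)" "C2 \<in> sets (F (ereal (real (k + n))) \<infinity>)"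
  shows "\<bar>(\<integral>x. (indicator C1 x - indicator C2 x) * (indicator A1 x - indicator A2 x) \<partial>M)
     - (\<integral>x. (indicator C1 x - indicator C2 x :: real) \<partial>M) * (\<integral>x. (indicator A1 x - indicator A2 x :: real) \<partial>M)\<bar>
     \<le> 4 * alpha_mix M F n"
proof -
  have AM: "A1 \<in> sets M" "A2 \<in> sets M" and CM: "C1 \<in> sets M" "C2 \<in> sets M"
    using A C sub_sets by auto
  have sp: "X \<in> sets M \<Longrightarrow> X \<inter> space M = X" for X using sets.sets_into_space by blast
  have e1: "(\<lambda>x. (indicator C1 x - indicator C2 x) * (indicator A1 x - indicator A2 x) :: real) =
     (\<lambda>x. indicator (A1 \<inter> C1) x - indicator (A1 \<inter> C2) x - indicator (A2 \<inter> C1) x + indicator (A2 \<inter> C2) x)"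
    by (rule ext) (simp add: indicator_inter_arith algebra_simps)
  have eI: "(\<integral>x. (indicator C1 x - indicator C2 x) * (indicator A1 x - indicator A2 x) \<partial>M)
      = measure M (A1 \<inter> C1) - measure M (A1 \<inter> C2) - measure M (A2 \<inter> C1) + measure M (A2 \<inter> C2)"
    unfolding e1 using AM CM
    by (simp add: int_ind sets.Int sp)
  have eC: "(\<integral>x. (indicator C1 x - indicator C2 x :: real) \<partial>M) = measure M C1 - measure M C2"
    using CM by (simp add: int_ind sp)
  have eA: "(\<integral>x. (indicator A1 x - indicator A2 x :: real) \<partial>M) = measure M A1 - measure M A2"
    using AM by (simp add: int_ind sp)
  have "\<bar>measure M (A1 \<inter> C1) - measure M A1 * measure M C1\<bar> \<le> alpha_mix M F n"
    "\<bar>measure M (A1 \<inter> C2) - measure M A1 * measure M C2\<bar> \<le> alpha_mix M F n"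
    "\<bar>measure M (A2 \<inter> C1) - measure M A2 * measure M C1\<bar> \<le> alpha_mix M F n"
    "\<bar>measure M (A2 \<inter> C2) - measure M A2 * measure M C2\<bar> \<le> alpha_mix M F n"
    using A C by (simp_all add: alpha_upper)
  moreover have "(measure M C1 - measure M C2) * (measure M A1 - measure M A2) =
     measure M A1 * measure M C1 - measure M A1 * measure M C2 - measure M A2 * measure M C1 + measure M A2 * measure M C2"
    by (simp add: algebra_simps)
  ultimately show ?thesis unfolding eI eC eA abs_le_iff by (intro conjI; linarith)
qed

lemma cov_mix:
  fixes V W :: "'a \<Rightarrow> real"
  assumes Vm: "V \<in> borel_measurable (F (-\<infinity>) (ereal (real k)))" and Vb: "AE x in M. \<bar>V x\<bar> \<le> b"
    and Wm: "W \<in> borel_measurable (F (ereal (real (k + n))) \<infinity>)" and Wb: "AE x in M. \<bar>W x\<bar> \<le> c"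
  shows "\<bar>(\<integral>x. V x * W x \<partial>M) - (\<integral>x. V x \<partial>M) * (\<integral>x. W x \<partial>M)\<bar> \<le> 4 * b * c * alpha_mix M F n"
proof -
  define G1 where "G1 = F (-\<infinity>) (ereal (real k))"
  define G2 where "G2 = F (ereal (real (k + n))) \<infinity>"
  have G1: "subalgebra M G1" and G2: "subalgebra M G2" unfolding G1_def G2_def by (rule F_sub)+
  have WmM: "W \<in> borel_measurable M" using Wm G2 unfolding G2_def by (rule measurable_from_subalg[rotated])
  define \<xi> where "\<xi> = (\<lambda>x. sgn (real_cond_exp M G1 W x - (\<integral>x. W x \<partial>M)))"
  define Y where "Y = (\<lambda>x. real_cond_exp M G1 W x - (\<integral>x. W x \<partial>M))"
  have s1: "\<bar>(\<integral>x. V x * W x \<partial>M) - (\<integral>x. V x \<partial>M) * (\<integral>x. W x \<partial>M)\<bar>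
     \<le> b * ((\<integral>x. \<xi> x * W x \<partial>M) - (\<integral>x. \<xi> x \<partial>M) * (\<integral>x. W x \<partial>M))"
    unfolding \<xi>_def by (rule sign_step[OF prob G1 Vm[folded G1_def] Vb WmM Wb])
  have Ym: "Y \<in> borel_measurable G1" unfolding Y_def by measurable
  have spG1: "space G1 = space M" using G1 unfolding subalgebra_def by simp
  define A1 where "A1 = {x \<in> space M. 0 < Y x}"
  define A2 where "A2 = {x \<in> space M. Y x < 0}"
  have A: "A1 \<in> sets G1" "A2 \<in> sets G1" unfolding A1_def A2_def
    using borel_measurable_less[OF borel_measurable_const Ym, of 0] borel_measurable_less[OF Ym borel_measurable_const, of 0]
    unfolding spG1 by auto
  have \<xi>ind: "x \<in> space M \<Longrightarrow> \<xi> x = indicator A1 x - indicator A2 x" for x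
    unfolding \<xi>_def A1_def A2_def Y_def by (simp add: sgn_real_def indicator_def)
  have \<xi>mM: "\<xi> \<in> borel_measurable M" unfolding \<xi>_def using WmM by measurable
  have \<xi>b: "AE x in M. \<bar>\<xi> x\<bar> \<le> 1" unfolding \<xi>_def by (simp add: abs_sgn_eq)
  define \<eta> where "\<eta> = (\<lambda>x. sgn (real_cond_exp M G2 \<xi> x - (\<integral>x. \<xi> x \<partial>M)))"
  have s2: "\<bar>(\<integral>x. W x * \<xi> x \<partial>M) - (\<integral>x. W x \<partial>M) * (\<integral>x. \<xi> x \<partial>M)\<bar>
     \<le> c * ((\<integral>x. \<eta> x * \<xi> x \<partial>M) - (\<integral>x. \<eta> x \<partial>M) * (\<integral>x. \<xi> x \<partial>M))"
    unfolding \<eta>_def by (rule sign_step[OF prob G2 Wm[folded G2_def] Wb \<xi>mM \<xi>b])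
  define Z where "Z = (\<lambda>x. real_cond_exp M G2 \<xi> x - (\<integral>x. \<xi> x \<partial>M))"
  have Zm: "Z \<in> borel_measurable G2" unfolding Z_def by measurable
  have spG2: "space G2 = space M" using G2 unfolding subalgebra_def by simp
  define C1 where "C1 = {x \<in> space M. 0 < Z x}"
  define C2 where "C2 = {x \<in> space M. Z x < 0}"
  have C: "C1 \<in> sets G2" "C2 \<in> sets G2" unfolding C1_def C2_def
    using borel_measurable_less[OF borel_measurable_const Zm, of 0] borel_measurable_less[OF Zm borel_measurable_const, of 0]
    unfolding spG2 by auto
  have \<eta>ind: "x \<in> space M \<Longrightarrow> \<eta> x = indicator C1 x - indicator C2 x" for x
    unfolding \<eta>_def C1_def C2_def Z_def by (simp add: sgn_real_def indicator_def)
  have "(\<integral>x. \<eta> x * \<xi> x \<partial>M) - (\<integral>x. \<eta> x \<partial>M) * (\<integral>x. \<xi> x \<partial>M)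
     = (\<integral>x. (indicator C1 x - indicator C2 x) * (indicator A1 x - indicator A2 x) \<partial>M)
     - (\<integral>x. (indicator C1 x - indicator C2 x :: real) \<partial>M) * (\<integral>x. (indicator A1 x - indicator A2 x :: real) \<partial>M)"
  proof -
    have "(\<integral>x. \<eta> x * \<xi> x \<partial>M) = (\<integral>x. (indicator C1 x - indicator C2 x) * (indicator A1 x - indicator A2 x) \<partial>M)"
      by (rule Bochner_Integration.integral_cong) (simp_all add: \<xi>ind \<eta>ind)
    moreover have "(\<integral>x. \<eta> x \<partial>M) = (\<integral>x. (indicator C1 x - indicator C2 x :: real) \<partial>M)"
      by (rule Bochner_Integration.integral_cong) (simp_all add: \<eta>ind)
    moreover have "(\<integral>x. \<xi> x \<partial>M) = (\<integral>x. (indicator A1 x - indicator A2 x :: real) \<partial>M)"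
      by (rule Bochner_Integration.integral_cong) (simp_all add: \<xi>ind)
    ultimately show ?thesis by simp
  qed
  also have "\<dots> \<le> 4 * alpha_mix M F n"
    using ind_cov[OF A[unfolded G1_def] C[unfolded G2_def]] by linarith
  finally have s3: "(\<integral>x. \<eta> x * \<xi> x \<partial>M) - (\<integral>x. \<eta> x \<partial>M) * (\<integral>x. \<xi> x \<partial>M) \<le> 4 * alpha_mix M F n" .
  have b0: "b \<ge> 0" using prob_AE_bound_nonneg[OF prob Vb] .
  have c0: "c \<ge> 0" using prob_AE_bound_nonneg[OF prob Wb] .
  have "(\<integral>x. \<xi> x * W x \<partial>M) - (\<integral>x. \<xi> x \<partial>M) * (\<integral>x. W x \<partial>M) \<le> c * (4 * alpha_mix M F n)"
  proof -
    have "(\<integral>x. \<xi> x * W x \<partial>M) - (\<integral>x. \<xi> x \<partial>M) * (\<integral>x. W x \<partial>M)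
        = (\<integral>x. W x * \<xi> x \<partial>M) - (\<integral>x. W x \<partial>M) * (\<integral>x. \<xi> x \<partial>M)"
      by (simp add: mult.commute)
    also have "\<dots> \<le> c * ((\<integral>x. \<eta> x * \<xi> x \<partial>M) - (\<integral>x. \<eta> x \<partial>M) * (\<integral>x. \<xi> x \<partial>M))"
      using s2 by linarith
    also have "\<dots> \<le> c * (4 * alpha_mix M F n)" by (rule mult_left_mono[OF s3 c0])
    finally show ?thesis .
  qed
  then have "b * ((\<integral>x. \<xi> x * W x \<partial>M) - (\<integral>x. \<xi> x \<partial>M) * (\<integral>x. W x \<partial>M)) \<le> b * (c * (4 * alpha_mix M F n))"
    using b0 by (rule mult_left_mono)
  moreover have "b * (c * (4 * alpha_mix M F n)) = 4 * b * c * alpha_mix M F n" by simp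
  ultimately show ?thesis using s1 by linarith
qed

end

inductive goodp :: "(nat \<Rightarrow> nat \<Rightarrow> 'a \<Rightarrow> real) \<Rightarrow> nat \<Rightarrow> (nat \<Rightarrow> bool) \<Rightarrow> ('a \<Rightarrow> real) \<Rightarrow> nat \<Rightarrow> bool"
  for X L P where
  g1: "goodp X L P (\<lambda>\<omega>. 1) 0"
| gS: "goodp X L P U s \<Longrightarrow> j \<in> {1..L} \<Longrightarrow> P t \<Longrightarrow> goodp X L P (\<lambda>\<omega>. U \<omega> * X j t \<omega>) (Suc s)"

lemma goodp_mono: "goodp X L P U s \<Longrightarrow> (\<And>t. P t \<Longrightarrow> Q t) \<Longrightarrow> goodp X L Q U s"
  by (induction rule: goodp.induct) (auto intro: goodp.intros)

lemma goodp_single: "j \<in> {1..L} \<Longrightarrow> P t \<Longrightarrow> goodp X L P (X j t) 1"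
  using gS[OF g1, of j L P t X] by simp

lemma goodp_mult: "goodp X L P W s' \<Longrightarrow> goodp X L P U s \<Longrightarrow> goodp X L P (\<lambda>\<omega>. U \<omega> * W \<omega>) (s + s')"
proof (induction rule: goodp.induct)
  case g1 then show ?case by simp
next
  case (gS W s' j t)
  have "goodp X L P (\<lambda>\<omega>. (U \<omega> * W \<omega>) * X j t \<omega>) (Suc (s + s'))"
    using gS by (intro goodp.gS) auto
  then show ?case by (simp add: mult.assoc)
qed

lemma abs_mult_le: "\<bar>a\<bar> \<le> x \<Longrightarrow> \<bar>b\<bar> \<le> y \<Longrightarrow> \<bar>a * b\<bar> \<le> x * (y::real)"
  by (simp add: abs_mult mult_mono')

context L35
begin

interpretation P: prob_space M by (rule prob)

lemma int_abs_le:
  fixes f :: "'a \<Rightarrow> real"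
  assumes "f \<in> borel_measurable M" "AE x in M. \<bar>f x\<bar> \<le> c"
  shows "\<bar>\<integral>x. f x \<partial>M\<bar> \<le> c"
proof -
  have "\<bar>\<integral>x. f x \<partial>M\<bar> \<le> (\<integral>x. \<bar>f x\<bar> \<partial>M)" by (rule integral_abs_bound)
  also have "\<dots> \<le> (\<integral>x. c \<partial>M)"
    by (rule integral_mono_AE') (use assms prob_AE_bound_nonneg[OF prob assms(2)] in auto)
  finally show ?thesis by (simp add: P.prob_space)
qed

lemma win_sub: "subalgebra M (win t h)" unfolding win_def by (rule F_sub)

lemma approx:
  assumes "goodp X L P U s" and G: "subalgebra M G" and wn: "\<And>t. P t \<Longrightarrow> sets (win t h) \<subseteq> sets G"
  shows "\<exists>V. V \<in> borel_measurable G \<and> (AE \<omega> in M. \<bar>V \<omega>\<bar> \<le> B ^ s) \<and> (AE \<omega> in M. \<bar>U \<omega>\<bar> \<le> B ^ s)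
     \<and> U \<in> borel_measurable M \<and> (\<integral>\<omega>. \<bar>U \<omega> - V \<omega>\<bar> \<partial>M) \<le> s * B ^ s * (exp (- \<kappa> * real h) / \<kappa>)"
  using assms(1)
proof (induction rule: goodp.induct)
  case g1
  show ?case by (intro exI[where x="\<lambda>\<omega>. 1"]) simp
next
  case (gS U s j t)
  obtain V where Vm: "V \<in> borel_measurable G" and Vb: "AE \<omega> in M. \<bar>V \<omega>\<bar> \<le> B ^ s"
    and Ub: "AE \<omega> in M. \<bar>U \<omega>\<bar> \<le> B ^ s" and Um: "U \<in> borel_measurable M"
    and UV: "(\<integral>\<omega>. \<bar>U \<omega> - V \<omega>\<bar> \<partial>M) \<le> s * B ^ s * (exp (- \<kappa> * real h) / \<kappa>)"
    using gS.IH by blast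
  define e where "e = exp (- \<kappa> * real h) / \<kappa>"
  have e0: "e \<ge> 0" unfolding e_def using C1(1) by simp
  define Y where "Y = real_cond_exp M (win t h) (X j t)"
  have sub: "subalgebra G (win t h)"
    using wn[OF gS.hyps(3)] G win_sub unfolding subalgebra_def by auto
  have Ym: "Y \<in> borel_measurable G" unfolding Y_def
    by (rule measurable_from_subalg[OF sub]) simp
  have VmM: "V \<in> borel_measurable M" using Vm G by (rule measurable_from_subalg[rotated])
  have YmM: "Y \<in> borel_measurable M" unfolding Y_def by simp
  have Xm: "X j t \<in> borel_measurable M" using X_meas gS.hyps(2) by blast
  have Yb: "AE \<omega> in M. \<bar>Y \<omega>\<bar> \<le> B" unfolding Y_def
    by (rule cond_exp_bounded[OF prob win_sub Xm Xb[OF gS.hyps(2)]])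
  have Xbb: "AE \<omega> in M. \<bar>X j t \<omega>\<bar> \<le> B" using Xb[OF gS.hyps(2)] .
  have XY: "(\<integral>\<omega>. \<bar>X j t \<omega> - Y \<omega>\<bar> \<partial>M) \<le> e"
    unfolding Y_def e_def using beta_upper(1)[OF gS.hyps(2), of t h] beta_bound[OF gS.hyps(2), of h] by linarith
  have Bs: "B ^ s \<ge> 1" using B_ge1 by simp
  have B0: "B \<ge> 0" using B_ge1 by simp
  have s1: "(\<lambda>\<omega>. V \<omega> * Y \<omega>) \<in> borel_measurable G" using Vm Ym by measurable
  have s2: "AE \<omega> in M. \<bar>V \<omega> * Y \<omega>\<bar> \<le> B ^ Suc s"
    using Vb Yb by eventually_elim (simp only: power_Suc2 abs_mult_le)
  have s3: "AE \<omega> in M. \<bar>U \<omega> * X j t \<omega>\<bar> \<le> B ^ Suc s"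
    using Ub Xbb by eventually_elim (simp only: power_Suc2 abs_mult_le)
  have s4: "(\<lambda>\<omega>. U \<omega> * X j t \<omega>) \<in> borel_measurable M" using Um Xm by measurable
  have i1: "integrable M (\<lambda>\<omega>. \<bar>X j t \<omega> - Y \<omega>\<bar>)"
    by (rule bounded_integrable[OF prob, where c="2*B"]) (use Xm YmM Xbb Yb in \<open>measurable, auto elim: AE_mp\<close>)
  have i2: "integrable M (\<lambda>\<omega>. \<bar>U \<omega> - V \<omega>\<bar>)"
    by (rule bounded_integrable[OF prob, where c="2*B^s"]) (use Um VmM Ub Vb in \<open>measurable, auto elim: AE_mp\<close>)
  have "(\<integral>\<omega>. \<bar>U \<omega> * X j t \<omega> - V \<omega> * Y \<omega>\<bar> \<partial>M)
      \<le> (\<integral>\<omega>. B ^ s * \<bar>X j t \<omega> - Y \<omega>\<bar> + B * \<bar>U \<omega> - V \<omega>\<bar> \<partial>M)"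
  proof (rule integral_mono_AE')
    show "integrable M (\<lambda>\<omega>. B ^ s * \<bar>X j t \<omega> - Y \<omega>\<bar> + B * \<bar>U \<omega> - V \<omega>\<bar>)"
      using i1 i2 by simp
    show "AE \<omega> in M. \<bar>U \<omega> * X j t \<omega> - V \<omega> * Y \<omega>\<bar> \<le> B ^ s * \<bar>X j t \<omega> - Y \<omega>\<bar> + B * \<bar>U \<omega> - V \<omega>\<bar>"
      using Ub Yb
    proof eventually_elim
      case (elim \<omega>)
      have "U \<omega> * X j t \<omega> - V \<omega> * Y \<omega> = U \<omega> * (X j t \<omega> - Y \<omega>) + Y \<omega> * (U \<omega> - V \<omega>)"
        by (simp add: algebra_simps)
      then have "\<bar>U \<omega> * X j t \<omega> - V \<omega> * Y \<omega>\<bar> \<le> \<bar>U \<omega>\<bar> * \<bar>X j t \<omega> - Y \<omega>\<bar> + \<bar>Y \<omega>\<bar> * \<bar>U \<omega> - V \<omega>\<bar>"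
        by (metis abs_mult abs_triangle_ineq)
      also have "\<dots> \<le> B ^ s * \<bar>X j t \<omega> - Y \<omega>\<bar> + B * \<bar>U \<omega> - V \<omega>\<bar>"
        by (intro add_mono mult_right_mono) (use elim in auto)
      finally show ?case .
    qed
    show "AE \<omega> in M. 0 \<le> B ^ s * \<bar>X j t \<omega> - Y \<omega>\<bar> + B * \<bar>U \<omega> - V \<omega>\<bar>"
      using B0 by (intro AE_I2) simp
  qed
  also have "\<dots> = B ^ s * (\<integral>\<omega>. \<bar>X j t \<omega> - Y \<omega>\<bar> \<partial>M) + B * (\<integral>\<omega>. \<bar>U \<omega> - V \<omega>\<bar> \<partial>M)"
    using i1 i2 by simp
  also have "\<dots> \<le> B ^ s * e + B * (s * B ^ s * e)"
    by (intro add_mono mult_left_mono) (use XY UV[folded e_def] B0 in auto)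
  also have "\<dots> \<le> Suc s * B ^ Suc s * e"
  proof -
    have "B ^ s * e \<le> B ^ Suc s * e"
      using B_ge1 e0 by (intro mult_right_mono) (auto simp: power_increasing)
    then show ?thesis by (simp add: algebra_simps)
  qed
  finally show ?case
    using s1 s2 s3 s4 unfolding e_def by (intro exI[where x="\<lambda>\<omega>. V \<omega> * Y \<omega>"]) auto
qed

end

context L35
begin

interpretation P: prob_space M by (rule prob)

lemma int_diff_le:
  fixes f g :: "'a \<Rightarrow> real"
  assumes "integrable M f" "integrable M g"
  shows "\<bar>(\<integral>x. f x \<partial>M) - (\<integral>x. g x \<partial>M)\<bar> \<le> (\<integral>x. \<bar>f x - g x\<bar> \<partial>M)"
proof -
  have "(\<integral>x. f x \<partial>M) - (\<integral>x. g x \<partial>M) = (\<integral>x. f x - g x \<partial>M)" using assms by simp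
  then show ?thesis using integral_abs_bound[of M "\<lambda>x. f x - g x"] by simp
qed

lemma tri3: "\<bar>(a::real) - d\<bar> \<le> \<bar>a - b\<bar> + \<bar>b - c\<bar> + \<bar>c - d\<bar>" by linarith

lemma decor:
  assumes U: "goodp X L (\<lambda>t. t \<le> T) U s1" and W: "goodp X L (\<lambda>t. T + g \<le> t) W s2"
  shows "\<bar>(\<integral>x. U x * W x \<partial>M) - (\<integral>x. U x \<partial>M) * (\<integral>x. W x \<partial>M)\<bar>
          \<le> (2 * real (s1 + s2) + 4) * B ^ (s1 + s2) * (exp (- \<kappa> * real (g div 3)) / \<kappa>)"
proof -
  define h where "h = g div 3"
  define n' where "n' = g - 2 * h"
  define k where "k = T + h"
  define G1 where "G1 = F (-\<infinity>) (ereal (real k))"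
  define G2 where "G2 = F (ereal (real (k + n'))) \<infinity>"
  define e where "e = exp (- \<kappa> * real h) / \<kappa>"
  have e0: "e \<ge> 0" unfolding e_def using C1(1) by simp
  have hn: "h \<le> n'" "2 * h \<le> g" unfolding n'_def h_def by auto
  have wn1: "sets (win t h) \<subseteq> sets G1" if "t \<le> T" for t
    unfolding win_def G1_def k_def by (rule F_mono) (use that in auto)
  have wn2: "sets (win t h) \<subseteq> sets G2" if "T + g \<le> t" for t
  proof -
    have "real (k + n') \<le> real_of_int (int t - int h)"
      using that hn unfolding k_def n'_def by linarith
    then show ?thesis unfolding win_def G2_def by (intro F_mono) auto
  qed
  obtain V where Vm: "V \<in> borel_measurable G1" and Vb: "AE \<omega> in M. \<bar>V \<omega>\<bar> \<le> B ^ s1"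
    and Ub: "AE \<omega> in M. \<bar>U \<omega>\<bar> \<le> B ^ s1" and Um: "U \<in> borel_measurable M"
    and UV: "(\<integral>\<omega>. \<bar>U \<omega> - V \<omega>\<bar> \<partial>M) \<le> s1 * B ^ s1 * e"
    using approx[OF U F_sub[of "-\<infinity>" "ereal (real k)"] wn1[unfolded G1_def]] unfolding e_def G1_def by blast
  obtain V' where V'm: "V' \<in> borel_measurable G2" and V'b: "AE \<omega> in M. \<bar>V' \<omega>\<bar> \<le> B ^ s2"
    and Wb: "AE \<omega> in M. \<bar>W \<omega>\<bar> \<le> B ^ s2" and Wm: "W \<in> borel_measurable M"
    and WV: "(\<integral>\<omega>. \<bar>W \<omega> - V' \<omega>\<bar> \<partial>M) \<le> s2 * B ^ s2 * e"
    using approx[OF W F_sub[of "ereal (real (k + n'))" "\<infinity>"] wn2[unfolded G2_def]] unfolding e_def G2_def by blast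
  have VmM: "V \<in> borel_measurable M" using Vm F_sub unfolding G1_def by (rule measurable_from_subalg[rotated])
  have V'mM: "V' \<in> borel_measurable M" using V'm F_sub unfolding G2_def by (rule measurable_from_subalg[rotated])
  define b1 where "b1 = B ^ s1"
  define b2 where "b2 = B ^ s2"
  have b1: "b1 \<ge> 1" and b2: "b2 \<ge> 1" unfolding b1_def b2_def using B_ge1 by simp_all
  have iU: "integrable M U" using bounded_integrable[OF prob Um Ub] .
  have iW: "integrable M W" using bounded_integrable[OF prob Wm Wb] .
  have iV: "integrable M V" using bounded_integrable[OF prob VmM Vb] .
  have iV': "integrable M V'" using bounded_integrable[OF prob V'mM V'b] .
  have "AE x in M. \<bar>U x * W x\<bar> \<le> B ^ s1 * B ^ s2" using Ub Wb by eventually_elim (rule abs_mult_le)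
  then have iUW: "integrable M (\<lambda>x. U x * W x)"
    by (rule bounded_integrable[OF prob, rotated]) (use Um Wm in measurable)
  have "AE x in M. \<bar>V x * V' x\<bar> \<le> B ^ s1 * B ^ s2" using Vb V'b by eventually_elim (rule abs_mult_le)
  then have iVV: "integrable M (\<lambda>x. V x * V' x)"
    by (rule bounded_integrable[OF prob, rotated]) (use VmM V'mM in measurable)
  have iUV: "integrable M (\<lambda>\<omega>. \<bar>U \<omega> - V \<omega>\<bar>)" using iU iV by simp
  have iWV: "integrable M (\<lambda>\<omega>. \<bar>W \<omega> - V' \<omega>\<bar>)" using iW iV' by simp
  have t1: "\<bar>(\<integral>x. U x * W x \<partial>M) - (\<integral>x. V x * V' x \<partial>M)\<bar> \<le> b1 * (s2 * b2 * e) + b2 * (s1 * b1 * e)"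
  proof -
    have "\<bar>(\<integral>x. U x * W x \<partial>M) - (\<integral>x. V x * V' x \<partial>M)\<bar> \<le> (\<integral>x. \<bar>U x * W x - V x * V' x\<bar> \<partial>M)"
      by (rule int_diff_le[OF iUW iVV])
    also have "\<dots> \<le> (\<integral>x. b1 * \<bar>W x - V' x\<bar> + b2 * \<bar>U x - V x\<bar> \<partial>M)"
    proof (rule integral_mono_AE')
      show "integrable M (\<lambda>x. b1 * \<bar>W x - V' x\<bar> + b2 * \<bar>U x - V x\<bar>)" using iUV iWV by simp
      show "AE x in M. 0 \<le> b1 * \<bar>W x - V' x\<bar> + b2 * \<bar>U x - V x\<bar>" using b1 b2 by (intro AE_I2) simp
      show "AE x in M. \<bar>U x * W x - V x * V' x\<bar> \<le> b1 * \<bar>W x - V' x\<bar> + b2 * \<bar>U x - V x\<bar>"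
        using Ub V'b
      proof eventually_elim
        case (elim x)
        have "U x * W x - V x * V' x = U x * (W x - V' x) + V' x * (U x - V x)" by (simp add: algebra_simps)
        then have "\<bar>U x * W x - V x * V' x\<bar> \<le> \<bar>U x\<bar> * \<bar>W x - V' x\<bar> + \<bar>V' x\<bar> * \<bar>U x - V x\<bar>"
          by (metis abs_mult abs_triangle_ineq)
        also have "\<dots> \<le> b1 * \<bar>W x - V' x\<bar> + b2 * \<bar>U x - V x\<bar>"
          by (intro add_mono mult_right_mono) (use elim in \<open>auto simp: b1_def b2_def\<close>)
        finally show ?case .
      qed
    qed
    also have "\<dots> = b1 * (\<integral>x. \<bar>W x - V' x\<bar> \<partial>M) + b2 * (\<integral>x. \<bar>U x - V x\<bar> \<partial>M)"
      using iUV iWV by simp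
    also have "\<dots> \<le> b1 * (s2 * b2 * e) + b2 * (s1 * b1 * e)"
      by (intro add_mono mult_left_mono) (use UV WV b1 b2 in \<open>auto simp: b1_def b2_def\<close>)
    finally show ?thesis .
  qed
  have t2: "\<bar>(\<integral>x. V x * V' x \<partial>M) - (\<integral>x. V x \<partial>M) * (\<integral>x. V' x \<partial>M)\<bar> \<le> 4 * b1 * b2 * e"
  proof -
    have "\<bar>(\<integral>x. V x * V' x \<partial>M) - (\<integral>x. V x \<partial>M) * (\<integral>x. V' x \<partial>M)\<bar> \<le> 4 * b1 * b2 * alpha_mix M F n'"
      by (rule cov_mix[OF Vm[unfolded G1_def] Vb[folded b1_def] V'm[unfolded G2_def] V'b[folded b2_def]])
    also have "alpha_mix M F n' \<le> e"
    proof -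
      have "exp (- \<kappa> * real n') \<le> exp (- \<kappa> * real h)" using hn C1(1) by simp
      then show ?thesis using alpha_bound[of n'] C1(1) unfolding e_def
        by (meson divide_right_mono less_imp_le order_trans)
    qed
    then have "4 * b1 * b2 * alpha_mix M F n' \<le> 4 * b1 * b2 * e" using b1 b2 by simp
    finally show ?thesis .
  qed
  have t3: "\<bar>(\<integral>x. V x \<partial>M) * (\<integral>x. V' x \<partial>M) - (\<integral>x. U x \<partial>M) * (\<integral>x. W x \<partial>M)\<bar>
      \<le> b1 * (s2 * b2 * e) + b2 * (s1 * b1 * e)"
  proof -
    have a1: "\<bar>\<integral>x. V x \<partial>M\<bar> \<le> b1" unfolding b1_def by (rule int_abs_le[OF VmM Vb])
    have a2: "\<bar>\<integral>x. W x \<partial>M\<bar> \<le> b2" unfolding b2_def by (rule int_abs_le[OF Wm Wb])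
    have d1: "\<bar>(\<integral>x. V' x \<partial>M) - (\<integral>x. W x \<partial>M)\<bar> \<le> s2 * b2 * e"
      using int_diff_le[OF iW iV'] WV unfolding b2_def by (simp add: abs_minus_commute)
    have d2: "\<bar>(\<integral>x. V x \<partial>M) - (\<integral>x. U x \<partial>M)\<bar> \<le> s1 * b1 * e"
      using int_diff_le[OF iU iV] UV unfolding b1_def by (simp add: abs_minus_commute)
    have "(\<integral>x. V x \<partial>M) * (\<integral>x. V' x \<partial>M) - (\<integral>x. U x \<partial>M) * (\<integral>x. W x \<partial>M)
       = (\<integral>x. V x \<partial>M) * ((\<integral>x. V' x \<partial>M) - (\<integral>x. W x \<partial>M)) + (\<integral>x. W x \<partial>M) * ((\<integral>x. V x \<partial>M) - (\<integral>x. U x \<partial>M))"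
      by (simp add: algebra_simps)
    then have "\<bar>(\<integral>x. V x \<partial>M) * (\<integral>x. V' x \<partial>M) - (\<integral>x. U x \<partial>M) * (\<integral>x. W x \<partial>M)\<bar>
      \<le> \<bar>\<integral>x. V x \<partial>M\<bar> * \<bar>(\<integral>x. V' x \<partial>M) - (\<integral>x. W x \<partial>M)\<bar> + \<bar>\<integral>x. W x \<partial>M\<bar> * \<bar>(\<integral>x. V x \<partial>M) - (\<integral>x. U x \<partial>M)\<bar>"
      by (metis abs_mult abs_triangle_ineq)
    also have "\<dots> \<le> b1 * (s2 * b2 * e) + b2 * (s1 * b1 * e)"
      by (intro add_mono mult_mono) (use a1 a2 d1 d2 b1 b2 e0 in auto)
    finally show ?thesis .
  qed
  have eq: "B ^ (s1 + s2) = b1 * b2" unfolding b1_def b2_def by (simp add: power_add)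
  have "\<bar>(\<integral>x. U x * W x \<partial>M) - (\<integral>x. U x \<partial>M) * (\<integral>x. W x \<partial>M)\<bar>
     \<le> \<bar>(\<integral>x. U x * W x \<partial>M) - (\<integral>x. V x * V' x \<partial>M)\<bar>
     + \<bar>(\<integral>x. V x * V' x \<partial>M) - (\<integral>x. V x \<partial>M) * (\<integral>x. V' x \<partial>M)\<bar>
     + \<bar>(\<integral>x. V x \<partial>M) * (\<integral>x. V' x \<partial>M) - (\<integral>x. U x \<partial>M) * (\<integral>x. W x \<partial>M)\<bar>"
    by (rule tri3)
  also have "\<dots> \<le> (b1 * (s2 * b2 * e) + b2 * (s1 * b1 * e)) + 4 * b1 * b2 * e + (b1 * (s2 * b2 * e) + b2 * (s1 * b1 * e))"
    by (intro add_mono t1 t2 t3)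
  also have "\<dots> = (2 * real (s1 + s2) + 4) * B ^ (s1 + s2) * e"
    unfolding eq by (simp add: algebra_simps)
  finally have "\<bar>(\<integral>x. U x * W x \<partial>M) - (\<integral>x. U x \<partial>M) * (\<integral>x. W x \<partial>M)\<bar>
          \<le> (2 * real (s1 + s2) + 4) * B ^ (s1 + s2) * e" .
  then show ?thesis unfolding e_def h_def .
qed

end

lemma stat_int:
  fixes Y :: "nat \<Rightarrow> 'a \<Rightarrow> real" and g :: "(nat \<Rightarrow> real) \<Rightarrow> real"
  assumes st: "stationary_proc M Y" and Ym: "\<And>i. Y i \<in> borel_measurable M" and I: "finite I"
    and g: "g \<in> borel_measurable (PiM I (\<lambda>_. borel))"
  shows "(\<integral>\<omega>. g (\<lambda>i\<in>I. Y (i + s) \<omega>) \<partial>M) = (\<integral>\<omega>. g (\<lambda>i\<in>I. Y i \<omega>) \<partial>M)"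
proof -
  have m1: "(\<lambda>\<omega>. \<lambda>i\<in>I. Y (i + s) \<omega>) \<in> measurable M (PiM I (\<lambda>_. borel))"
    by (rule measurable_restrict) (simp add: Ym)
  have m0: "(\<lambda>\<omega>. \<lambda>i\<in>I. Y i \<omega>) \<in> measurable M (PiM I (\<lambda>_. borel))"
    by (rule measurable_restrict) (simp add: Ym)
  have "(\<integral>\<omega>. g (\<lambda>i\<in>I. Y (i + s) \<omega>) \<partial>M) = (\<integral>x. g x \<partial>distr M (PiM I (\<lambda>_. borel)) (\<lambda>\<omega>. \<lambda>i\<in>I. Y (i + s) \<omega>))"
    by (rule integral_distr[OF m1 g, symmetric])
  also have "\<dots> = (\<integral>x. g x \<partial>distr M (PiM I (\<lambda>_. borel)) (\<lambda>\<omega>. \<lambda>i\<in>I. Y i \<omega>))"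
    using st I unfolding stationary_proc_def by metis
  also have "\<dots> = (\<integral>\<omega>. g (\<lambda>i\<in>I. Y i \<omega>) \<partial>M)"
    by (rule integral_distr[OF m0 g])
  finally show ?thesis .
qed

context L35
begin

interpretation P: prob_space M by (rule prob)

definition "a j = mean0 M X j"

lemma mean_shift: assumes j: "j \<in> {1..L}" shows "(\<integral>\<omega>. X j t \<omega> \<partial>M) = a j"
proof -
  have g: "(\<lambda>x::nat \<Rightarrow> real. x 0) \<in> borel_measurable (PiM {0} (\<lambda>_. borel))"
    by (rule measurable_component_singleton) simp
  have "(\<integral>\<omega>. (\<lambda>i\<in>{0::nat}. X j (i + t) \<omega>) 0 \<partial>M) = (\<integral>\<omega>. (\<lambda>i\<in>{0::nat}. X j i \<omega>) 0 \<partial>M)"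
    by (rule stat_int[OF X_stat[OF j] X_meas[OF j] _ g]) simp
  then show ?thesis unfolding a_def mean0_def by simp
qed

lemma sq_shift: assumes j: "j \<in> {1..L}" shows "(\<integral>\<omega>. (X j t \<omega>)\<^sup>2 \<partial>M) = (\<integral>\<omega>. (X j 0 \<omega>)\<^sup>2 \<partial>M)"
proof -
  have g: "(\<lambda>x::nat \<Rightarrow> real. (x 0)\<^sup>2) \<in> borel_measurable (PiM {0} (\<lambda>_. borel))"
    by measurable
  have "(\<integral>\<omega>. (\<lambda>x. (x 0)\<^sup>2) (\<lambda>i\<in>{0::nat}. X j (i + t) \<omega>) \<partial>M) = (\<integral>\<omega>. (\<lambda>x. (x 0)\<^sup>2) (\<lambda>i\<in>{0::nat}. X j i \<omega>) \<partial>M)"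
    by (rule stat_int[OF X_stat[OF j] X_meas[OF j] _ g]) simp
  then show ?thesis by simp
qed

lemma cov_shift: assumes j: "j \<in> {1..L}"
  shows "(\<integral>\<omega>. (X j (t + d) \<omega> - c) * (X j t \<omega> - c) \<partial>M) = (\<integral>\<omega>. (X j d \<omega> - c) * (X j 0 \<omega> - c) \<partial>M)"
proof -
  have g: "(\<lambda>x::nat \<Rightarrow> real. (x d - c) * (x 0 - c)) \<in> borel_measurable (PiM {0, d} (\<lambda>_. borel))"
    by measurable
  have "(\<integral>\<omega>. (\<lambda>x. (x d - c) * (x 0 - c)) (\<lambda>i\<in>{0, d}. X j (i + t) \<omega>) \<partial>M)
      = (\<integral>\<omega>. (\<lambda>x. (x d - c) * (x 0 - c)) (\<lambda>i\<in>{0, d}. X j i \<omega>) \<partial>M)"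
    by (rule stat_int[OF X_stat[OF j] X_meas[OF j] _ g]) simp
  then show ?thesis by (simp add: add.commute)
qed

end

lemma tri_abs3: "x = a + b * c + d * e \<Longrightarrow> \<bar>x\<bar> \<le> \<bar>a\<bar> + \<bar>b\<bar> * \<bar>c\<bar> + \<bar>d\<bar> * \<bar>e::real\<bar>"
  unfolding abs_mult[symmetric] by (simp add: order_trans[OF abs_triangle_ineq add_mono[OF abs_triangle_ineq order_refl]])

context L35
begin

interpretation P: prob_space M by (rule prob)

definition "Ef g = exp (- \<kappa> * real (g div 3)) / \<kappa>"
definition "cL = (4 * real L + 4) * B ^ (2 * L)"

lemma cL_nonneg: "cL \<ge> 0" unfolding cL_def using B_ge1 by simp

lemma Ef_nonneg: "Ef g \<ge> 0" unfolding Ef_def using C1(1) by simp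

lemma good_bound: "goodp X L P U s \<Longrightarrow> U \<in> borel_measurable M \<and> (AE \<omega> in M. \<bar>U \<omega>\<bar> \<le> B ^ s)"
proof (induction rule: goodp.induct)
  case g1 then show ?case using B_ge1 by simp
next
  case (gS U s j t)
  have "AE \<omega> in M. \<bar>U \<omega> * X j t \<omega>\<bar> \<le> B ^ s * B"
  proof -
    have u: "AE \<omega> in M. \<bar>U \<omega>\<bar> \<le> B ^ s" using gS.IH by blast
    show ?thesis using u Xb[OF gS.hyps(2), of t] by eventually_elim (rule abs_mult_le)
  qed
  moreover have "(\<lambda>a. U a * X j t a) \<in> borel_measurable M"
  proof -
    have "U \<in> borel_measurable M" using gS.IH by blast
    moreover have "X j t \<in> borel_measurable M" using X_meas[OF gS.hyps(2)] .
    ultimately show ?thesis by measurable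
  qed
  ultimately show ?case by (simp add: mult.commute)
qed

lemma good_int: "goodp X L P U s \<Longrightarrow> \<bar>\<integral>\<omega>. U \<omega> \<partial>M\<bar> \<le> B ^ s"
  using good_bound int_abs_le by blast

lemma decor2:
  assumes U: "goodp X L (\<lambda>t. t \<le> T) U s1" and W: "goodp X L (\<lambda>t. T + g \<le> t) W s2" and s: "s1 + s2 \<le> 2 * L"
  shows "\<bar>(\<integral>x. U x * W x \<partial>M) - (\<integral>x. U x \<partial>M) * (\<integral>x. W x \<partial>M)\<bar> \<le> cL * Ef g"
proof -
  have "(2 * real (s1 + s2) + 4) * B ^ (s1 + s2) \<le> (4 * real L + 4) * B ^ (2 * L)"
    using s B_ge1 by (intro mult_mono power_increasing) auto
  then have "(2 * real (s1 + s2) + 4) * B ^ (s1 + s2) * Ef g \<le> cL * Ef g"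
    unfolding cL_def by (rule mult_right_mono) (rule Ef_nonneg)
  then show ?thesis using decor[OF U W] unfolding Ef_def by linarith
qed

lemma peel:
  fixes W :: "nat \<Rightarrow> 'a \<Rightarrow> real" and lo hi s g :: "nat \<Rightarrow> nat" and w \<epsilon> :: "nat \<Rightarrow> real"
  assumes LL: "L' \<le> L"
    and Wg: "\<And>j. j \<in> {1..L'} \<Longrightarrow> goodp X L (\<lambda>t. lo j \<le> t \<and> t \<le> hi j) (W j) (s j)"
    and s2: "\<And>j. j \<in> {1..L'} \<Longrightarrow> s j \<le> 2"
    and gap: "\<And>j. j \<in> {2..L'} \<Longrightarrow> hi (j - 1) + g j \<le> lo j"
    and lh: "\<And>j. j \<in> {1..L'} \<Longrightarrow> lo j \<le> hi j"
    and eps: "\<And>j. j \<in> {1..L'} \<Longrightarrow> \<bar>(\<integral>\<omega>. W j \<omega> \<partial>M) - w j\<bar> \<le> \<epsilon> j"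
    and wb: "\<And>j. j \<in> {1..L'} \<Longrightarrow> \<bar>w j\<bar> \<le> B ^ 2"
  shows "\<bar>(\<integral>\<omega>. (\<Prod>j=1..L'. W j \<omega>) \<partial>M) - (\<Prod>j=1..L'. w j)\<bar>
     \<le> B ^ (2 * L') * ((\<Sum>j=1..L'. \<epsilon> j) + (\<Sum>j=2..L'. cL * Ef (g j)))"
proof (cases "L' = 0")
  case True then show ?thesis by (simp add: P.prob_space)
next
  case False
  have B0: "B \<ge> 0" using B_ge1 by simp
  have eps0: "j \<in> {1..L'} \<Longrightarrow> \<epsilon> j \<ge> 0" for j using eps[of j] by linarith
  have main: "goodp X L (\<lambda>t. t \<le> hi i) (\<lambda>\<omega>. \<Prod>j=1..i. W j \<omega>) (\<Sum>j=1..i. s j)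
      \<and> (\<Sum>j=1..i. s j) \<le> 2 * i
      \<and> \<bar>(\<integral>\<omega>. (\<Prod>j=1..i. W j \<omega>) \<partial>M) - (\<Prod>j=1..i. w j)\<bar>
         \<le> B ^ (2 * i) * ((\<Sum>j=1..i. \<epsilon> j) + (\<Sum>j=2..i. cL * Ef (g j)))"
    if "1 \<le> i" "i \<le> L'" for i
    using that
  proof (induction i rule: nat_induct_at_least)
    case base
    have g: "goodp X L (\<lambda>t. t \<le> hi 1) (W 1) (s 1)"
      by (rule goodp_mono[OF Wg]) (use base in auto)
    have e1: "\<epsilon> 1 \<ge> 0" using eps0[of 1] base by simp
    have "1 \<le> B ^ 2" using B_ge1 by (simp add: one_le_power)
    then have "1 * \<epsilon> 1 \<le> B ^ 2 * \<epsilon> 1" using e1 by (rule mult_right_mono)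
    then have "\<epsilon> 1 \<le> B ^ 2 * \<epsilon> 1" by simp
    then show ?case using g s2[of 1] eps[of 1] base by simp
  next
    case (Suc i)
    let ?U = "\<lambda>\<omega>. \<Prod>j=1..i. W j \<omega>"
    let ?sU = "\<Sum>j=1..i. s j"
    have IH: "goodp X L (\<lambda>t. t \<le> hi i) ?U ?sU" "?sU \<le> 2 * i"
      "\<bar>(\<integral>\<omega>. ?U \<omega> \<partial>M) - (\<Prod>j=1..i. w j)\<bar> \<le> B ^ (2 * i) * ((\<Sum>j=1..i. \<epsilon> j) + (\<Sum>j=2..i. cL * Ef (g j)))"
      using Suc by auto
    have jS: "Suc i \<in> {1..L'}" "Suc i \<in> {2..L'}" using Suc by auto
    have gp: "hi i + g (Suc i) \<le> lo (Suc i)" using gap[OF jS(2)] by simp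
    have Wl: "goodp X L (\<lambda>t. hi i + g (Suc i) \<le> t) (W (Suc i)) (s (Suc i))"
      by (rule goodp_mono[OF Wg[OF jS(1)]]) (use gp in auto)
    have Wh: "goodp X L (\<lambda>t. t \<le> hi (Suc i)) (W (Suc i)) (s (Suc i))"
      by (rule goodp_mono[OF Wg[OF jS(1)]]) auto
    have hih: "hi i \<le> hi (Suc i)" using gp lh[OF jS(1)] by linarith
    have Uh: "goodp X L (\<lambda>t. t \<le> hi (Suc i)) ?U ?sU"
      by (rule goodp_mono[OF IH(1)]) (use hih in auto)
    have prodeq: "(\<lambda>\<omega>. \<Prod>j=1..Suc i. W j \<omega>) = (\<lambda>\<omega>. ?U \<omega> * W (Suc i) \<omega>)" by simp
    have g': "goodp X L (\<lambda>t. t \<le> hi (Suc i)) (\<lambda>\<omega>. \<Prod>j=1..Suc i. W j \<omega>) (\<Sum>j=1..Suc i. s j)"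
      unfolding prodeq using goodp_mult[OF Wh Uh] by simp
    have ss: "(\<Sum>j=1..Suc i. s j) \<le> 2 * Suc i" using IH(2) s2[OF jS(1)] by simp
    have dc: "\<bar>(\<integral>\<omega>. ?U \<omega> * W (Suc i) \<omega> \<partial>M) - (\<integral>\<omega>. ?U \<omega> \<partial>M) * (\<integral>\<omega>. W (Suc i) \<omega> \<partial>M)\<bar>
        \<le> cL * Ef (g (Suc i))"
      by (rule decor2[OF IH(1) Wl]) (use IH(2) s2[OF jS(1)] Suc.prems LL in auto)
    have iU: "\<bar>\<integral>\<omega>. ?U \<omega> \<partial>M\<bar> \<le> B ^ (2 * i)"
      using good_int[OF IH(1)] B_ge1 IH(2) by (meson order_trans power_increasing)
    define A where "A = (\<integral>\<omega>. ?U \<omega> \<partial>M)"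
    define C where "C = (\<integral>\<omega>. W (Suc i) \<omega> \<partial>M)"
    define P where "P = (\<Prod>j=1..i. w j)"
    define R where "R = (\<Sum>j=1..i. \<epsilon> j) + (\<Sum>j=2..i. cL * Ef (g j))"
    have R0: "R \<ge> 0" unfolding R_def using eps0 Suc.prems
      by (intro add_nonneg_nonneg sum_nonneg) (auto intro!: mult_nonneg_nonneg Ef_nonneg simp: cL_def B0)
    have "(\<integral>\<omega>. ?U \<omega> * W (Suc i) \<omega> \<partial>M) - P * w (Suc i)
       = ((\<integral>\<omega>. ?U \<omega> * W (Suc i) \<omega> \<partial>M) - A * C) + A * (C - w (Suc i)) + w (Suc i) * (A - P)"
      by (simp add: algebra_simps)
    then have "\<bar>(\<integral>\<omega>. ?U \<omega> * W (Suc i) \<omega> \<partial>M) - P * w (Suc i)\<bar>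
       \<le> \<bar>(\<integral>\<omega>. ?U \<omega> * W (Suc i) \<omega> \<partial>M) - A * C\<bar> + \<bar>A\<bar> * \<bar>C - w (Suc i)\<bar> + \<bar>w (Suc i)\<bar> * \<bar>A - P\<bar>"
      by (rule tri_abs3)
    also have "\<dots> \<le> cL * Ef (g (Suc i)) + B ^ (2 * i) * \<epsilon> (Suc i) + B ^ 2 * (B ^ (2 * i) * R)"
      apply (intro add_mono mult_mono)
      using dc iU eps[OF jS(1)] wb[OF jS(1)] IH(3) unfolding A_def C_def P_def R_def
      by (auto simp: B0)
    also have "\<dots> \<le> B ^ (2 * Suc i) * (R + \<epsilon> (Suc i) + cL * Ef (g (Suc i)))"
    proof -
      have b1: "B ^ (2 * i) \<le> B ^ (2 * Suc i)" "1 \<le> B ^ (2 * Suc i)"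
        by (rule power_increasing, simp, rule B_ge1) (rule one_le_power[OF B_ge1])
      have "cL * Ef (g (Suc i)) \<le> B ^ (2 * Suc i) * (cL * Ef (g (Suc i)))"
      proof -
        have "cL * Ef (g (Suc i)) \<ge> 0" using cL_nonneg Ef_nonneg by simp
        from mult_right_mono[OF b1(2) this] show ?thesis by simp
      qed
      moreover have "B ^ (2 * i) * \<epsilon> (Suc i) \<le> B ^ (2 * Suc i) * \<epsilon> (Suc i)"
        using b1(1) eps0[OF jS(1)] by (rule mult_right_mono)
      moreover have "B ^ 2 * (B ^ (2 * i) * R) = B ^ (2 * Suc i) * R"
        by (simp add: power_add[symmetric] power2_eq_square)
      ultimately show ?thesis unfolding distrib_left by linarith
    qed
    finally have fin: "\<bar>(\<integral>\<omega>. ?U \<omega> * W (Suc i) \<omega> \<partial>M) - P * w (Suc i)\<bar>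
        \<le> B ^ (2 * Suc i) * (R + \<epsilon> (Suc i) + cL * Ef (g (Suc i)))" .
    have "(\<Sum>j=2..Suc i. cL * Ef (g j)) = (\<Sum>j=2..i. cL * Ef (g j)) + cL * Ef (g (Suc i))"
      using Suc.hyps by simp
    then have "R + \<epsilon> (Suc i) + cL * Ef (g (Suc i)) = (\<Sum>j=1..Suc i. \<epsilon> j) + (\<Sum>j=2..Suc i. cL * Ef (g j))"
      unfolding R_def by simp
    with fin have "\<bar>(\<integral>\<omega>. (\<Prod>j=1..Suc i. W j \<omega>) \<partial>M) - (\<Prod>j=1..Suc i. w j)\<bar>
        \<le> B ^ (2 * Suc i) * ((\<Sum>j=1..Suc i. \<epsilon> j) + (\<Sum>j=2..Suc i. cL * Ef (g j)))"
      unfolding P_def by (simp add: mult.commute)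
    then show ?case using g' ss by blast
  qed
  show ?thesis using main[of L'] False by simp
qed

end

context L35
begin

definition "K0 N = nat \<lfloor>real N powr (1 - \<gamma>)\<rfloor>"

lemma q_mono_step:
  assumes j: "j \<in> {2..L}" and u: "n\<^sub>0 \<le> u"
  shows "real (q j u) + real d * real u powr \<gamma> \<le> real (q j (u + d))"
proof (induction d)
  case 0 then show ?case by simp
next
  case (Suc d)
  have "real (q j (u + d)) + real (u + d) powr \<gamma> \<le> real (q j (u + d + 1))"
    using C3[OF j, of "u + d"] u by simp
  moreover have "real u powr \<gamma> \<le> real (u + d) powr \<gamma>"
    using gamma by (intro powr_mono2) auto
  ultimately show ?case using Suc.IH by (simp add: algebra_simps)
qed

lemma q_gap:
  assumes j: "j \<in> {2..L}" and u: "n\<^sub>0 \<le> u" "u \<le> v"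
  shows "real (q j u) + real (v - u) * real u powr \<gamma> \<le> real (q j v)"
  using q_mono_step[OF j u(1), of "v - u"] u(2) by simp

lemma q_mono:
  assumes j: "j \<in> {1..L}" and u: "n\<^sub>0 \<le> u" "u \<le> v"
  shows "q j u \<le> q j v"
proof (cases "j = 1")
  case True then show ?thesis using C2(2) u by simp
next
  case False
  then have "j \<in> {2..L}" using j by auto
  from q_gap[OF this u] have "real (q j u) \<le> real (q j v)"
    by (smt (verit) mult_nonneg_nonneg of_nat_0_le_iff powr_ge_zero)
  then show ?thesis by simp
qed

lemma K0_facts:
  assumes adm: "n\<^sub>0 \<le> K0 N"
  shows "1 \<le> N" "K0 N \<le> N" "n\<^sub>0 \<le> N" "2 \<le> real N powr (1 - \<gamma>)" "real N powr (1 - \<gamma>) \<le> 2 * real (K0 N)"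
proof -
  have K: "2 \<le> K0 N" using adm n0 by simp
  show N1: "1 \<le> N"
  proof (rule ccontr)
    assume "\<not> 1 \<le> N" then have "N = 0" by simp
    then have "K0 N = 0" unfolding K0_def by simp
    then show False using K by simp
  qed
  define x where "x = real N powr (1 - \<gamma>)"
  have x0: "x \<ge> 0" unfolding x_def by simp
  have e1: "real (K0 N) = real_of_int \<lfloor>x\<rfloor>" unfolding K0_def x_def using x0 x_def by simp
  have fl: "real (K0 N) \<le> x" "x < real (K0 N) + 1" unfolding e1 using floor_correct[of x] by auto
  have xN: "x \<le> real N"
  proof -
    have "x \<le> real N powr 1" unfolding x_def using N1 gamma by (intro powr_mono) auto
    then show ?thesis using N1 by simp
  qed
  show "K0 N \<le> N" using fl(1) xN by linarith
  then show "n\<^sub>0 \<le> N" using adm by simp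
  show "2 \<le> real N powr (1 - \<gamma>)" using fl(1) K unfolding x_def by linarith
  show "real N powr (1 - \<gamma>) \<le> 2 * real (K0 N)" using fl(2) K unfolding x_def by linarith
qed

lemma qN_ge:
  assumes adm: "n\<^sub>0 \<le> K0 N" and j: "j \<in> {1..L}"
  shows "real N \<le> real (q j N)"
  using j
proof (induction j)
  case 0 then show ?case by simp
next
  case (Suc j)
  show ?case
  proof (cases "j = 0")
    case True
    then have "q (Suc j) N = r * N + p" using C2(2) by simp
    moreover have "N \<le> r * N" using C2(1) by simp
    ultimately have "N \<le> q (Suc j) N" by linarith
    then show ?thesis by simp
  next
    case False
    then have j1: "j \<in> {1..<L}" "j \<in> {1..L}" "Suc j \<in> {1..L}" using Suc.prems by auto
    have IH: "real N \<le> real (q j N)" using Suc.IH j1(2) by blast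
    have Nn: "n\<^sub>0 \<le> N" "K0 N \<le> N" "1 \<le> N" using K0_facts[OF adm] by auto
    have c4: "real (q j N) * real N powr \<gamma> \<le> real (q (Suc j) (K0 N))"
      using C4[OF j1(1) Nn(1)] unfolding K0_def by simp
    have "real N powr \<gamma> \<ge> 1" using Nn(3) gamma by (simp add: ge_one_powr_ge_zero)
    then have "real (q j N) \<le> real (q j N) * real N powr \<gamma>"
      by (simp add: mult_le_cancel_left1)
    moreover have "q (Suc j) (K0 N) \<le> q (Suc j) N" using q_mono[OF j1(3)] adm Nn by simp
    ultimately show ?thesis using IH c4 by linarith
  qed
qed

lemma q_sep:
  assumes adm: "n\<^sub>0 \<le> K0 N" and j: "j \<in> {2..L}"
    and k: "K0 N \<le> k" "k \<le> N" and k': "K0 N \<le> k'" "k' \<le> N"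
  shows "real (q (j - 1) k') + real N * (real N powr \<gamma> - 1) \<le> real (q j k)"
proof -
  have Nn: "n\<^sub>0 \<le> N" "K0 N \<le> N" "1 \<le> N" using K0_facts[OF adm] by auto
  have j1: "j - 1 \<in> {1..<L}" "j - 1 \<in> {1..L}" "j \<in> {1..L}" "Suc (j - 1) = j" using j by auto
  have c4: "real (q (j - 1) N) * real N powr \<gamma> \<le> real (q j (K0 N))"
    using C4[OF j1(1) Nn(1)] j1(4) unfolding K0_def by simp
  have m1: "q j (K0 N) \<le> q j k" using q_mono[OF j1(3)] adm k by simp
  have m2: "q (j - 1) k' \<le> q (j - 1) N" using q_mono[OF j1(2)] adm k' by simp
  have qN: "real N \<le> real (q (j - 1) N)" by (rule qN_ge[OF adm j1(2)])
  have p1: "real N powr \<gamma> - 1 \<ge> 0" using Nn(3) gamma by (simp add: ge_one_powr_ge_zero)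
  have "real N * (real N powr \<gamma> - 1) \<le> real (q (j - 1) N) * (real N powr \<gamma> - 1)"
    using qN p1 by (rule mult_right_mono)
  then show ?thesis using c4 m1 m2 by (simp add: algebra_simps)
qed

end

lemma prod_head: "1 \<le> (L::nat) \<Longrightarrow> (\<Prod>j=1..L. f j) = f 1 * (\<Prod>j=2..L. f j)"
proof (cases "L = 1")
  case True then show ?thesis by simp
next
  case False
  assume "1 \<le> L"
  with False have "1 < L" by simp
  then show ?thesis using prod.atLeast_Suc_atMost[of 1 L f] by (simp add: numeral_2_eq_2)
qed

context L35
begin

interpretation P: prob_space M by (rule prob)

definition "Phi G = exp \<kappa> / \<kappa> * exp (- (\<kappa> / 3) * G)"
definition "gapA N = real N * (real N powr \<gamma> - 1)"

lemma Phi_nonneg: "Phi G \<ge> 0" unfolding Phi_def using C1(1) by simp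

lemma Phi_mono: "G \<le> G' \<Longrightarrow> Phi G' \<le> Phi G"
  unfolding Phi_def using C1(1) by (intro mult_left_mono) (auto simp: divide_nonneg_pos)

lemma Ef_le: assumes "G \<le> real g" shows "Ef g \<le> Phi G"
proof -
  have "real g \<le> 3 * real (g div 3) + 2" by linarith
  then have "- \<kappa> * real (g div 3) \<le> \<kappa> + (- (\<kappa> / 3) * G)"
  proof -
    have h1: "(\<kappa> / 3) * G \<le> (\<kappa> / 3) * (3 * real (g div 3) + 2)"
      using assms \<open>real g \<le> 3 * real (g div 3) + 2\<close> C1(1) by (intro mult_left_mono) auto
    have h2: "(\<kappa> / 3) * (3 * real (g div 3) + 2) = \<kappa> * real (g div 3) + 2 * \<kappa> / 3"
      by (simp add: algebra_simps)
    show ?thesis using h1 h2 C1(1) by linarith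
  qed
  then have "exp (- \<kappa> * real (g div 3)) \<le> exp \<kappa> * exp (- (\<kappa> / 3) * G)"
    by (simp add: exp_add[symmetric])
  then show ?thesis unfolding Ef_def Phi_def using C1(1) by (simp add: divide_right_mono)
qed

lemma a_bound: "j \<in> {1..L} \<Longrightarrow> \<bar>a j\<bar> \<le> B"
  using int_abs_le[OF X_meas Xb, of j 0] mean_shift[of j 0] by simp

lemma sep_block:
  assumes adm: "n\<^sub>0 \<le> K0 N" and j: "j \<in> {2..L}" and k: "K0 N \<le> k" "k \<le> k'" "k' \<le> N"
  shows "q (j - 1) k' \<le> q j k" "gapA N \<le> real (q j k - q (j - 1) k')"
proof -
  have s: "real (q (j - 1) k') + gapA N \<le> real (q j k)"
    using q_sep[OF adm j k(1) _ _ k(3)] k unfolding gapA_def by simp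
  have "gapA N \<ge> 0" unfolding gapA_def using K0_facts[OF adm] gamma
    by (simp add: ge_one_powr_ge_zero)
  then show "q (j - 1) k' \<le> q j k" using s by simp
  then show "gapA N \<le> real (q j k - q (j - 1) k')" using s by (simp add: of_nat_diff)
qed

lemma sumPhi:
  assumes "\<And>j. j \<in> {2..L} \<Longrightarrow> f j \<le> cL * Phi G"
  shows "(\<Sum>j=2..L. f j) \<le> real L * (cL * Phi G)"
proof -
  have "(\<Sum>j=2..L. f j) \<le> (\<Sum>j=2..L. cL * Phi G)" using assms by (rule sum_mono)
  also have "\<dots> = real (L - 1) * (cL * Phi G)" by simp
  also have "\<dots> \<le> real L * (cL * Phi G)"
    using cL_nonneg Phi_nonneg by (intro mult_right_mono) auto
  finally show ?thesis .
qed

lemma est_mean: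
  assumes adm: "n\<^sub>0 \<le> K0 N" and k: "K0 N \<le> k" "k \<le> N"
  shows "\<bar>(\<integral>\<omega>. (\<Prod>j=1..L. X j (q j k) \<omega>) \<partial>M) - (\<Prod>j=1..L. a j)\<bar>
     \<le> B ^ (2 * L) * (real L * (cL * Phi (gapA N)))"
proof -
  have "\<bar>(\<integral>\<omega>. (\<Prod>j=1..L. X j (q j k) \<omega>) \<partial>M) - (\<Prod>j=1..L. a j)\<bar>
     \<le> B ^ (2 * L) * ((\<Sum>j=1..L. 0) + (\<Sum>j=2..L. cL * Ef (q j k - q (j - 1) k)))"
  proof (rule peel[where lo="\<lambda>j. q j k" and hi="\<lambda>j. q j k" and s="\<lambda>j. 1"])
    show "goodp X L (\<lambda>t. q j k \<le> t \<and> t \<le> q j k) (X j (q j k)) 1" if "j \<in> {1..L}" for j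
      by (rule goodp_single) (use that in auto)
    show "q (j - 1) k + (q j k - q (j - 1) k) \<le> q j k" if "j \<in> {2..L}" for j
      using sep_block(1)[OF adm that k(1) order_refl k(2)] by simp
    show "\<bar>(\<integral>\<omega>. X j (q j k) \<omega> \<partial>M) - a j\<bar> \<le> 0" if "j \<in> {1..L}" for j
      using mean_shift[OF that] by simp
    show "\<bar>a j\<bar> \<le> B ^ 2" if "j \<in> {1..L}" for j
      using a_bound[OF that] B_ge1 by (smt (verit) one_le_power power2_eq_square mult_le_cancel_left1)
  qed auto
  also have "\<dots> \<le> B ^ (2 * L) * (real L * (cL * Phi (gapA N)))"
  proof -
    have "(\<Sum>j=2..L. cL * Ef (q j k - q (j - 1) k)) \<le> real L * (cL * Phi (gapA N))"
      by (rule sumPhi, rule mult_left_mono[OF Ef_le cL_nonneg])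
        (rule sep_block(2)[OF adm _ k(1) order_refl k(2)], simp)
    then show ?thesis using B_ge1 by (simp add: mult_left_mono)
  qed
  finally show ?thesis .
qed

lemma est_diag:
  assumes adm: "n\<^sub>0 \<le> K0 N" and k: "K0 N \<le> k" "k \<le> N"
  shows "\<bar>(\<integral>\<omega>. (\<Prod>j=1..L. X j (q j k) \<omega>) * (\<Prod>j=1..L. X j (q j k) \<omega>) \<partial>M)
         - (\<Prod>j=1..L. \<integral>\<omega>. (X j 0 \<omega>)\<^sup>2 \<partial>M)\<bar>
     \<le> B ^ (2 * L) * (real L * (cL * Phi (gapA N)))"
proof -
  have eq: "(\<lambda>\<omega>. (\<Prod>j=1..L. X j (q j k) \<omega>) * (\<Prod>j=1..L. X j (q j k) \<omega>))
      = (\<lambda>\<omega>. \<Prod>j=1..L. X j (q j k) \<omega> * X j (q j k) \<omega>)"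
    by (simp add: prod.distrib)
  have "\<bar>(\<integral>\<omega>. (\<Prod>j=1..L. X j (q j k) \<omega> * X j (q j k) \<omega>) \<partial>M) - (\<Prod>j=1..L. \<integral>\<omega>. (X j 0 \<omega>)\<^sup>2 \<partial>M)\<bar>
     \<le> B ^ (2 * L) * ((\<Sum>j=1..L. 0) + (\<Sum>j=2..L. cL * Ef (q j k - q (j - 1) k)))"
  proof (rule peel[where lo="\<lambda>j. q j k" and hi="\<lambda>j. q j k" and s="\<lambda>j. 2"])
    show "goodp X L (\<lambda>t. q j k \<le> t \<and> t \<le> q j k) (\<lambda>\<omega>. X j (q j k) \<omega> * X j (q j k) \<omega>) 2" if "j \<in> {1..L}" for j
    proof -
      have g: "goodp X L (\<lambda>t. q j k \<le> t \<and> t \<le> q j k) (X j (q j k)) 1" by (rule goodp_single) (use that in auto)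
      from goodp_mult[OF g g] show ?thesis by (simp add: numeral_2_eq_2)
    qed
    show "q (j - 1) k + (q j k - q (j - 1) k) \<le> q j k" if "j \<in> {2..L}" for j
      using sep_block(1)[OF adm that k(1) order_refl k(2)] by simp
    show "\<bar>(\<integral>\<omega>. X j (q j k) \<omega> * X j (q j k) \<omega> \<partial>M) - (\<integral>\<omega>. (X j 0 \<omega>)\<^sup>2 \<partial>M)\<bar> \<le> 0" if "j \<in> {1..L}" for j
      using sq_shift[OF that, of "q j k"] by (simp add: power2_eq_square)
    show "\<bar>\<integral>\<omega>. (X j 0 \<omega>)\<^sup>2 \<partial>M\<bar> \<le> B ^ 2" if "j \<in> {1..L}" for j
    proof (rule int_abs_le)
      show "(\<lambda>\<omega>. (X j 0 \<omega>)\<^sup>2) \<in> borel_measurable M" using X_meas[OF that] by measurable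
      show "AE \<omega> in M. \<bar>(X j 0 \<omega>)\<^sup>2\<bar> \<le> B ^ 2"
        using Xb[OF that, of 0] by eventually_elim (simp only: power2_eq_square abs_mult_le)
    qed
  qed auto
  also have "\<dots> \<le> B ^ (2 * L) * (real L * (cL * Phi (gapA N)))"
  proof -
    have "(\<Sum>j=2..L. cL * Ef (q j k - q (j - 1) k)) \<le> real L * (cL * Phi (gapA N))"
      by (rule sumPhi, rule mult_left_mono[OF Ef_le cL_nonneg])
        (rule sep_block(2)[OF adm _ k(1) order_refl k(2)], simp)
    then show ?thesis using B_ge1 by (simp add: mult_left_mono)
  qed
  finally show ?thesis unfolding eq .
qed

definition "gapB N d = real d * real (K0 N) powr \<gamma>"

lemma est_off:
  assumes adm: "n\<^sub>0 \<le> K0 N" and k: "K0 N \<le> k" "k \<le> k'" "k' \<le> N"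
  shows "\<bar>(\<integral>\<omega>. (\<Prod>j=1..L. X j (q j k) \<omega>) * (\<Prod>j=1..L. X j (q j k') \<omega>) \<partial>M)
         - (\<integral>\<omega>. X 1 (q 1 k) \<omega> * X 1 (q 1 k') \<omega> \<partial>M) * (\<Prod>j=2..L. (a j)\<^sup>2)\<bar>
     \<le> B ^ (2 * L) * (real L * (cL * Phi (gapB N (k' - k))) + real L * (cL * Phi (gapA N)))"
proof -
  have L1: "1 \<in> {1..L}" using l_pos by simp
  have eq: "(\<lambda>\<omega>. (\<Prod>j=1..L. X j (q j k) \<omega>) * (\<Prod>j=1..L. X j (q j k') \<omega>))
      = (\<lambda>\<omega>. \<Prod>j=1..L. X j (q j k) \<omega> * X j (q j k') \<omega>)"
    by (simp add: prod.distrib)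
  define w where "w = (\<lambda>j. if j = 1 then (\<integral>\<omega>. X 1 (q 1 k) \<omega> * X 1 (q 1 k') \<omega> \<partial>M) else (a j)\<^sup>2)"
  define \<epsilon> where "\<epsilon> = (\<lambda>j. if j = 1 then 0 else cL * Ef (q j k' - q j k))"
  have weq: "(\<Prod>j=1..L. w j) = (\<integral>\<omega>. X 1 (q 1 k) \<omega> * X 1 (q 1 k') \<omega> \<partial>M) * (\<Prod>j=2..L. (a j)\<^sup>2)"
    using prod_head[OF l_pos, of w] unfolding w_def by simp
  have kn: "n\<^sub>0 \<le> k" using adm k by simp
  have "\<bar>(\<integral>\<omega>. (\<Prod>j=1..L. X j (q j k) \<omega> * X j (q j k') \<omega>) \<partial>M) - (\<Prod>j=1..L. w j)\<bar>
     \<le> B ^ (2 * L) * ((\<Sum>j=1..L. \<epsilon> j) + (\<Sum>j=2..L. cL * Ef (q j k - q (j - 1) k')))"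
  proof (rule peel[where lo="\<lambda>j. q j k" and hi="\<lambda>j. q j k'" and s="\<lambda>j. 2"])
    show "goodp X L (\<lambda>t. q j k \<le> t \<and> t \<le> q j k') (\<lambda>\<omega>. X j (q j k) \<omega> * X j (q j k') \<omega>) 2" if "j \<in> {1..L}" for j
    proof -
      have "q j k \<le> q j k'" using q_mono[OF that kn k(2)] .
      then have g1: "goodp X L (\<lambda>t. q j k \<le> t \<and> t \<le> q j k') (X j (q j k)) 1"
        by (intro goodp_single) (use that in auto)
      have g2: "goodp X L (\<lambda>t. q j k \<le> t \<and> t \<le> q j k') (X j (q j k')) 1"
        using \<open>q j k \<le> q j k'\<close> by (intro goodp_single) (use that in auto)
      from goodp_mult[OF g2 g1] show ?thesis by (simp add: numeral_2_eq_2)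
    qed
    show "q (j - 1) k' + (q j k - q (j - 1) k') \<le> q j k" if "j \<in> {2..L}" for j
      using sep_block(1)[OF adm that k] by simp
    show "q j k \<le> q j k'" if "j \<in> {1..L}" for j using q_mono[OF that kn k(2)] .
    show "\<bar>(\<integral>\<omega>. X j (q j k) \<omega> * X j (q j k') \<omega> \<partial>M) - w j\<bar> \<le> \<epsilon> j" if j: "j \<in> {1..L}" for j
    proof (cases "j = 1")
      case True then show ?thesis unfolding w_def \<epsilon>_def by simp
    next
      case False
      have le: "q j k \<le> q j k'" using q_mono[OF j kn k(2)] .
      have "\<bar>(\<integral>\<omega>. X j (q j k) \<omega> * X j (q j k') \<omega> \<partial>M) - (\<integral>\<omega>. X j (q j k) \<omega> \<partial>M) * (\<integral>\<omega>. X j (q j k') \<omega> \<partial>M)\<bar>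
          \<le> cL * Ef (q j k' - q j k)"
      proof (rule decor2)
        show "goodp X L (\<lambda>t. t \<le> q j k) (X j (q j k)) 1" by (rule goodp_single) (use j in auto)
        show "goodp X L (\<lambda>t. q j k + (q j k' - q j k) \<le> t) (X j (q j k')) 1"
          by (rule goodp_single) (use j le in auto)
      qed (use l_pos in auto)
      then show ?thesis using False mean_shift[OF j] unfolding w_def \<epsilon>_def by (simp add: power2_eq_square)
    qed
    show "\<bar>w j\<bar> \<le> B ^ 2" if j: "j \<in> {1..L}" for j
    proof (cases "j = 1")
      case True
      have "\<bar>\<integral>\<omega>. X 1 (q 1 k) \<omega> * X 1 (q 1 k') \<omega> \<partial>M\<bar> \<le> B * B"
      proof (rule int_abs_le)
        show "(\<lambda>\<omega>. X 1 (q 1 k) \<omega> * X 1 (q 1 k') \<omega>) \<in> borel_measurable M" using X_meas[OF L1] by measurable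
        show "AE \<omega> in M. \<bar>X 1 (q 1 k) \<omega> * X 1 (q 1 k') \<omega>\<bar> \<le> B * B"
          using Xb[OF L1, of "q 1 k"] Xb[OF L1, of "q 1 k'"] by eventually_elim (rule abs_mult_le)
      qed
      then show ?thesis using True unfolding w_def by (simp add: power2_eq_square)
    next
      case False
      have "\<bar>a j\<bar> * \<bar>a j\<bar> \<le> B * B" using a_bound[OF j] by (intro mult_mono) auto
      then show ?thesis using False unfolding w_def by (simp add: power2_eq_square abs_mult)
    qed
  qed (use l_pos in auto)
  also have "\<dots> \<le> B ^ (2 * L) * (real L * (cL * Phi (gapB N (k' - k))) + real L * (cL * Phi (gapA N)))"
  proof -
    have s1: "(\<Sum>j=1..L. \<epsilon> j) = (\<Sum>j=2..L. cL * Ef (q j k' - q j k))"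
      using prod_head l_pos sum.atLeast_Suc_atMost[of 1 L \<epsilon>]
      by (cases "L = 1") (auto simp: \<epsilon>_def numeral_2_eq_2 intro!: sum.cong)
    have "(\<Sum>j=2..L. cL * Ef (q j k' - q j k)) \<le> real L * (cL * Phi (gapB N (k' - k)))"
    proof (rule sumPhi, rule mult_left_mono[OF Ef_le cL_nonneg])
      fix j assume j: "j \<in> {2..L}"
      have "real (q j k) + real (k' - k) * real k powr \<gamma> \<le> real (q j k')" by (rule q_gap[OF j kn k(2)])
      moreover have "real (K0 N) powr \<gamma> \<le> real k powr \<gamma>" using k gamma by (intro powr_mono2) auto
      then have "gapB N (k' - k) \<le> real (k' - k) * real k powr \<gamma>" unfolding gapB_def
        by (intro mult_left_mono) auto
      ultimately show "gapB N (k' - k) \<le> real (q j k' - q j k)" by (simp add: of_nat_diff)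
    qed
    moreover have "(\<Sum>j=2..L. cL * Ef (q j k - q (j - 1) k')) \<le> real L * (cL * Phi (gapA N))"
      by (rule sumPhi, rule mult_left_mono[OF Ef_le cL_nonneg])
        (rule sep_block(2)[OF adm _ k], simp)
    ultimately show ?thesis using B_ge1 s1 by (intro mult_left_mono) auto
  qed
  finally show ?thesis unfolding eq weq .
qed

end

lemma asy_tend: fixes c \<delta> :: real assumes "c > 0" "\<delta> > 0"
  shows "((\<lambda>x. x ^ 2 * exp (- c * x powr \<delta>)) \<longlongrightarrow> 0) at_top"
  using assms by real_asymp

lemma asy_bound:
  fixes c \<delta> :: real assumes c: "c > 0" and d: "\<delta> > 0"
  shows "\<exists>C. \<forall>x\<ge>0. x ^ 2 * exp (- c * x powr \<delta>) \<le> C"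
proof -
  have "eventually (\<lambda>x. x ^ 2 * exp (- c * x powr \<delta>) < 1) at_top"
    using asy_tend[OF c d] by (rule order_tendstoD) simp
  then obtain X0 where X0: "\<And>x. x \<ge> X0 \<Longrightarrow> x ^ 2 * exp (- c * x powr \<delta>) < 1"
    by (auto simp: eventually_at_top_linorder)
  show ?thesis
  proof (intro exI[where x="max 1 (X0 ^ 2)"] allI impI)
    fix x :: real assume x: "x \<ge> 0"
    show "x ^ 2 * exp (- c * x powr \<delta>) \<le> max 1 (X0 ^ 2)"
    proof (cases "x \<ge> X0")
      case True then show ?thesis using X0[of x] by simp
    next
      case False
      have e: "exp (- c * x powr \<delta>) \<le> 1" using c x by simp
      have "x ^ 2 \<le> X0 ^ 2" using False x by (intro power_mono) auto
      then have "x ^ 2 * exp (- c * x powr \<delta>) \<le> X0 ^ 2 * 1"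
        using e by (intro mult_mono) auto
      then show ?thesis by simp
    qed
  qed
qed

lemma row_sum: fixes m M :: nat and f :: "nat \<Rightarrow> real" shows "(\<Sum>k=m+1..m+M. f (m + M + 1 - k)) = (\<Sum>d=1..M. (f d :: real))"
proof (rule sum.reindex_bij_witness[where i="\<lambda>d. m + M + 1 - d" and j="\<lambda>k. m + M + 1 - k"])
  fix a assume "a \<in> {m + 1..m + M}"
  then have "m + 1 \<le> a" "a \<le> m + M" by auto
  then show "m + M + 1 - (m + M + 1 - a) = a" "m + M + 1 - a \<in> {1..M}" by auto
next
  fix b assume "b \<in> {1..M}"
  then have "1 \<le> b" "b \<le> M" by auto
  then show "m + M + 1 - (m + M + 1 - b) = b" "m + M + 1 - b \<in> {m + 1..m + M}" by auto
qed simp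

lemma tail_bound:
  fixes f :: "nat \<Rightarrow> real"
  assumes fb: "\<And>d. \<bar>f d\<bar> \<le> K * \<rho> ^ d" and r0: "0 \<le> \<rho>" and r1: "\<rho> < 1"
  shows "summable (\<lambda>n. f (Suc n))"
    "\<bar>(\<Sum>n. f (Suc n)) - (\<Sum>d=1..M. f d)\<bar> \<le> K * \<rho> ^ Suc M / (1 - \<rho>)"
proof -
  have gs: "summable (\<lambda>n. K * \<rho> ^ Suc n)"
    using r0 r1 by (intro summable_mult) (simp add: summable_geometric)
  show sm: "summable (\<lambda>n. f (Suc n))"
  proof (rule summable_comparison_test[OF _ gs])
    have "\<And>n. \<bar>f (Suc n)\<bar> \<le> K * \<rho> ^ Suc n" using fb .
    then show "\<exists>N. \<forall>n\<ge>N. norm (f (Suc n)) \<le> K * \<rho> ^ Suc n" by auto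
  qed
  have sm2: "summable (\<lambda>n. f (Suc (n + M)))"
    using sm summable_iff_shift[of "\<lambda>n. f (Suc n)" M] by simp
  have gs2: "summable (\<lambda>n. K * \<rho> ^ Suc M * \<rho> ^ n)"
    using r0 r1 by (intro summable_mult) (simp add: summable_geometric)
  have e1: "(\<Sum>n. f (Suc n)) - (\<Sum>d=1..M. f d) = (\<Sum>n. f (Suc (n + M)))"
    using suminf_split_initial_segment[OF sm, of M] by (simp add: sum.atLeast1_atMost_eq)
  have b: "\<bar>f (Suc (n + M))\<bar> \<le> K * \<rho> ^ Suc M * \<rho> ^ n" for n
    using fb[of "Suc (n + M)"] by (simp add: power_add mult_ac)
  have "(\<Sum>n. f (Suc (n + M))) \<le> (\<Sum>n. K * \<rho> ^ Suc M * \<rho> ^ n)"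
    by (rule suminf_le[OF _ sm2 gs2]) (rule abs_le_D1[OF b])
  moreover have "- (\<Sum>n. K * \<rho> ^ Suc M * \<rho> ^ n) \<le> (\<Sum>n. f (Suc (n + M)))"
  proof -
    have "(\<Sum>n. - (K * \<rho> ^ Suc M * \<rho> ^ n)) \<le> (\<Sum>n. f (Suc (n + M)))"
    proof (rule suminf_le[OF _ summable_minus[OF gs2] sm2])
      fix n show "- (K * \<rho> ^ Suc M * \<rho> ^ n) \<le> f (Suc (n + M))" using abs_le_D2[OF b[of n]] by linarith
    qed
    then show ?thesis using suminf_minus[OF gs2] by simp
  qed
  moreover have "(\<Sum>n. K * \<rho> ^ Suc M * \<rho> ^ n) = K * \<rho> ^ Suc M / (1 - \<rho>)"
    using r0 r1 by (simp add: suminf_mult suminf_geometric summable_geometric)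
  ultimately show "\<bar>(\<Sum>n. f (Suc n)) - (\<Sum>d=1..M. f d)\<bar> \<le> K * \<rho> ^ Suc M / (1 - \<rho>)"
    unfolding e1 by linarith
qed

lemma model_sum:
  fixes f :: "nat \<Rightarrow> real"
  assumes fb: "\<And>d. \<bar>f d\<bar> \<le> K * \<rho> ^ d" and r0: "0 \<le> \<rho>" and r1: "\<rho> < 1"
  shows "\<bar>(\<Sum>k=m+1..m+M. \<Sum>k'=m+1..m+M. f ((k - k') + (k' - k))) - real M * (f 0 + 2 * (\<Sum>n. f (Suc n)))\<bar>
     \<le> 2 * K / (1 - \<rho>) ^ 2"
proof -
  define T where "T = (\<Sum>n. f (Suc n))"
  define D where "D = (\<lambda>M. (\<Sum>k=m+1..m+M. \<Sum>k'=m+1..m+M. f ((k - k') + (k' - k))) - real M * (f 0 + 2 * T))"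
  have K0: "K \<ge> 0" using fb[of 0] by simp
  have claim: "\<bar>D M\<bar> \<le> 2 * K / (1 - \<rho>) * (\<Sum>i<M. \<rho> ^ Suc i)" for M
  proof (induction M)
    case 0 then show ?case unfolding D_def by simp
  next
    case (Suc M)
    define S where "S = {m+1..m+M}"
    define u where "u = m + M + 1"
    have ins: "{m+1..m+Suc M} = insert u S" unfolding S_def u_def by auto
    have uS: "u \<notin> S" "finite S" unfolding S_def u_def by auto
    define h where "h = (\<lambda>k k'. f ((k - k') + (k' - k)))"
    have r1': "(\<Sum>k'\<in>S. h u k') = (\<Sum>d=1..M. f d)"
    proof -
      have "(\<Sum>k'\<in>S. h u k') = (\<Sum>k=m+1..m+M. f (m + M + 1 - k))"
        unfolding S_def h_def u_def by (intro sum.cong) auto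
      also have "\<dots> = (\<Sum>d=1..M. f d)" by (rule row_sum)
      finally show ?thesis .
    qed
    have r2': "(\<Sum>k\<in>S. h k u) = (\<Sum>d=1..M. f d)"
    proof -
      have "(\<Sum>k\<in>S. h k u) = (\<Sum>k=m+1..m+M. f (m + M + 1 - k))"
        unfolding S_def h_def u_def by (intro sum.cong) auto
      also have "\<dots> = (\<Sum>d=1..M. f d)" by (rule row_sum)
      finally show ?thesis .
    qed
    have dec: "(\<Sum>k\<in>insert u S. \<Sum>k'\<in>insert u S. h k k')
        = (\<Sum>k\<in>S. \<Sum>k'\<in>S. h k k') + (\<Sum>k\<in>S. h k u) + (\<Sum>k'\<in>S. h u k') + h u u"
      using uS by (simp add: sum.distrib algebra_simps)
    have huu: "h u u = f 0" unfolding h_def by simp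
    have Deq: "D (Suc M) = D M + 2 * ((\<Sum>d=1..M. f d) - T)"
      unfolding D_def using dec r1' r2' huu ins unfolding h_def S_def
      by (simp add: algebra_simps)
    have tb: "\<bar>T - (\<Sum>d=1..M. f d)\<bar> \<le> K * \<rho> ^ Suc M / (1 - \<rho>)"
      unfolding T_def by (rule tail_bound(2)[OF fb r0 r1])
    have "\<bar>D (Suc M)\<bar> \<le> \<bar>D M\<bar> + 2 * (K * \<rho> ^ Suc M / (1 - \<rho>))"
    proof -
      have "\<bar>D M + 2 * ((\<Sum>d=1..M. f d) - T)\<bar> \<le> \<bar>D M\<bar> + \<bar>2 * ((\<Sum>d=1..M. f d) - T)\<bar>"
        by (rule abs_triangle_ineq)
      moreover have "\<bar>2 * ((\<Sum>d=1..M. f d) - T)\<bar> = 2 * \<bar>(\<Sum>d=1..M. f d) - T\<bar>" by (simp only: abs_mult) 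
      moreover have "\<bar>(\<Sum>d=1..M. f d) - T\<bar> = \<bar>T - (\<Sum>d=1..M. f d)\<bar>" by (rule abs_minus_commute)
      ultimately show ?thesis unfolding Deq using tb by linarith
    qed
    also have "\<dots> \<le> 2 * K / (1 - \<rho>) * (\<Sum>i<M. \<rho> ^ Suc i) + 2 * K / (1 - \<rho>) * \<rho> ^ Suc M"
      using Suc.IH by simp
    also have "\<dots> = 2 * K / (1 - \<rho>) * (\<Sum>i<Suc M. \<rho> ^ Suc i)"
      by (simp add: algebra_simps)
    finally show ?case .
  qed
  have "(\<Sum>i<M. \<rho> ^ Suc i) \<le> (\<Sum>i<M. \<rho> ^ i)"
    using r0 r1 by (intro sum_mono) (simp add: mult_left_le_one_le)
  also have "\<dots> = (1 - \<rho> ^ M) / (1 - \<rho>)" using r1 by (simp add: sum_gp_strict)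
  also have "\<dots> \<le> 1 / (1 - \<rho>)" using r0 r1 by (intro divide_right_mono) auto
  finally have gsum: "(\<Sum>i<M. \<rho> ^ Suc i) \<le> 1 / (1 - \<rho>)" .
  have "\<bar>D M\<bar> \<le> 2 * K / (1 - \<rho>) * (1 / (1 - \<rho>))"
    using claim[of M] gsum K0 r1 by (meson order_trans mult_left_mono divide_nonneg_pos mult_nonneg_nonneg zero_le_numeral diff_gt_0_iff_gt)
  then show ?thesis unfolding D_def T_def by (simp add: power2_eq_square)
qed

context L35
begin

interpretation P: prob_space M by (rule prob)

definition "fcov d = (\<integral>\<omega>. (X 1 (r * d) \<omega> - a 1) * (X 1 0 \<omega> - a 1) \<partial>M)"

lemma L1: "1 \<in> {1..L}" using l_pos by simp

lemma prod_int: "integrable M (\<lambda>\<omega>. X 1 t \<omega> * X 1 t' \<omega>)"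
proof -
  have "AE \<omega> in M. \<bar>X 1 t \<omega> * X 1 t' \<omega>\<bar> \<le> B * B"
    using Xb[OF L1, of t] Xb[OF L1, of t'] by eventually_elim (rule abs_mult_le)
  then show ?thesis by (rule bounded_integrable[OF prob, rotated]) (use X_meas[OF L1] in measurable)
qed

lemma expand:
  "(\<integral>\<omega>. (X 1 t \<omega> - a 1) * (X 1 t' \<omega> - a 1) \<partial>M) = (\<integral>\<omega>. X 1 t \<omega> * X 1 t' \<omega> \<partial>M) - (a 1)\<^sup>2"
proof -
  have i1: "integrable M (X 1 t)" "integrable M (X 1 t')" using Xint[OF L1] by auto
  have "(\<lambda>\<omega>. (X 1 t \<omega> - a 1) * (X 1 t' \<omega> - a 1)) = (\<lambda>\<omega>. X 1 t \<omega> * X 1 t' \<omega> - a 1 * X 1 t' \<omega> - a 1 * X 1 t \<omega> + a 1 * a 1)"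
    by (rule ext) (simp add: algebra_simps)
  then have "(\<integral>\<omega>. (X 1 t \<omega> - a 1) * (X 1 t' \<omega> - a 1) \<partial>M)
      = (\<integral>\<omega>. X 1 t \<omega> * X 1 t' \<omega> \<partial>M) - a 1 * (\<integral>\<omega>. X 1 t' \<omega> \<partial>M) - a 1 * (\<integral>\<omega>. X 1 t \<omega> \<partial>M) + a 1 * a 1"
    using i1 prod_int[of t t'] by (simp add: P.prob_space)
  then show ?thesis using mean_shift[OF L1] by (simp add: power2_eq_square)
qed

lemma fcov_alt: "fcov d = (\<integral>\<omega>. X 1 (r * d) \<omega> * X 1 0 \<omega> \<partial>M) - (a 1)\<^sup>2"
  unfolding fcov_def by (rule expand)

lemma fcov_0: "fcov 0 = (\<integral>\<omega>. (X 1 0 \<omega>)\<^sup>2 \<partial>M) - (a 1)\<^sup>2"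
  unfolding fcov_alt by (simp add: power2_eq_square)

lemma fcov_bound: "\<bar>fcov d\<bar> \<le> cL * Phi (real d)"
proof -
  have "\<bar>(\<integral>\<omega>. X 1 0 \<omega> * X 1 (r * d) \<omega> \<partial>M) - (\<integral>\<omega>. X 1 0 \<omega> \<partial>M) * (\<integral>\<omega>. X 1 (r * d) \<omega> \<partial>M)\<bar>
      \<le> cL * Ef (r * d)"
  proof (rule decor2[where T=0])
    show "goodp X L (\<lambda>t. t \<le> 0) (X 1 0) 1" by (rule goodp_single) (use L1 in auto)
    show "goodp X L (\<lambda>t. 0 + r * d \<le> t) (X 1 (r * d)) 1" by (rule goodp_single) (use L1 in auto)
  qed (use l_pos in auto)
  moreover have "Ef (r * d) \<le> Phi (real d)"
  proof (rule Ef_le)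
    have "d \<le> r * d" using C2(1) by simp
    then show "real d \<le> real (r * d)" by linarith
  qed
  ultimately have "\<bar>(\<integral>\<omega>. X 1 0 \<omega> * X 1 (r * d) \<omega> \<partial>M) - a 1 * a 1\<bar> \<le> cL * Phi (real d)"
    using mean_shift[OF L1] cL_nonneg by (smt (verit) mult_left_mono)
  then show ?thesis unfolding fcov_alt by (simp add: mult.commute power2_eq_square)
qed

lemma cross:
  assumes "k \<le> k'"
  shows "(\<integral>\<omega>. X 1 (q 1 k) \<omega> * X 1 (q 1 k') \<omega> \<partial>M) = fcov (k' - k) + (a 1)\<^sup>2"
proof -
  have qk: "q 1 k' = q 1 k + r * (k' - k)" using C2(2) assms by (simp add: algebra_simps diff_mult_distrib2)
  have "(\<integral>\<omega>. (X 1 (q 1 k + r * (k' - k)) \<omega> - a 1) * (X 1 (q 1 k) \<omega> - a 1) \<partial>M) = fcov (k' - k)"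
    unfolding fcov_def by (rule cov_shift[OF L1])
  then have "(\<integral>\<omega>. X 1 (q 1 k') \<omega> * X 1 (q 1 k) \<omega> \<partial>M) - (a 1)\<^sup>2 = fcov (k' - k)"
    unfolding qk[symmetric] expand .
  then show ?thesis by (simp add: mult.commute)
qed

end

lemma goodp_prod:
  fixes n :: nat and W :: "nat \<Rightarrow> 'a \<Rightarrow> real" and s :: "nat \<Rightarrow> nat"
  shows "(\<And>j. j \<in> {1..n} \<Longrightarrow> goodp X L P (W j) (s j)) \<Longrightarrow> goodp X L P (\<lambda>\<omega>. \<Prod>j=1..n. W j \<omega>) (\<Sum>j=1..n. s j)"
proof (induction n)
  case 0 then show ?case using g1 by simp
next
  case (Suc n)
  have a: "goodp X L P (\<lambda>\<omega>. \<Prod>j=1..n. W j \<omega>) (\<Sum>j=1..n. s j)" using Suc by auto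
  have b: "goodp X L P (W (Suc n)) (s (Suc n))" using Suc.prems by auto
  from goodp_mult[OF b a] show ?case by simp
qed

context L35
begin

interpretation P: prob_space M by (rule prob)

definition "Pk k \<omega> = (\<Prod>j=1..L. X j (q j k) \<omega>)"
definition "Aa = (\<Prod>j=1..L. a j)"
definition "P2 = (\<Prod>j=2..L. (a j)\<^sup>2)"
definition "m2 = (\<integral>\<omega>. (X 1 0 \<omega>)\<^sup>2 \<partial>M)"
definition "Pm2 = (\<Prod>j=2..L. \<integral>\<omega>. (X j 0 \<omega>)\<^sup>2 \<partial>M)"
definition "Dl = m2 * (Pm2 - P2)"
definition "model k k' = P2 * fcov ((k - k') + (k' - k)) + (if k = k' then Dl else 0)"
definition "EM N = B ^ (2 * L) * (real L * (cL * Phi (gapA N)))"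
definition "Ebd N = (1 + 2 * B ^ L) * EM N + B ^ (2 * L) * (real L * (cL * Phi (gapB N 1)))"

lemma Pk_good: "goodp X L (\<lambda>t. True) (Pk k) L"
proof -
  have "goodp X L (\<lambda>t. True) (\<lambda>\<omega>. \<Prod>j=1..L. X j (q j k) \<omega>) (\<Sum>j=1..L. 1)"
    by (rule goodp_prod) (rule goodp_single, auto)
  then show ?thesis unfolding Pk_def by simp
qed

lemma Pk_int: "integrable M (Pk k)" "integrable M (\<lambda>\<omega>. Pk k \<omega> * Pk k' \<omega>)"
proof -
  show "integrable M (Pk k)" using good_bound[OF Pk_good] bounded_integrable[OF prob] by blast
  have "goodp X L (\<lambda>t. True) (\<lambda>\<omega>. Pk k \<omega> * Pk k' \<omega>) (L + L)"
    by (rule goodp_mult[OF Pk_good Pk_good])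
  then show "integrable M (\<lambda>\<omega>. Pk k \<omega> * Pk k' \<omega>)" using good_bound bounded_integrable[OF prob] by blast
qed

lemma Aa_bound: "\<bar>Aa\<bar> \<le> B ^ L"
proof -
  have "\<bar>Aa\<bar> = (\<Prod>j=1..L. \<bar>a j\<bar>)" unfolding Aa_def by (simp add: abs_prod)
  also have "\<dots> \<le> (\<Prod>j=1..L. B)" by (rule prod_mono) (use a_bound in auto)
  finally show ?thesis by simp
qed

lemma Aa_sq: "Aa\<^sup>2 = (a 1)\<^sup>2 * P2"
  unfolding Aa_def P2_def using prod_head[OF l_pos, of a]
  by (simp add: power_mult_distrib prod_power_distrib)

lemma EM_nonneg: "EM N \<ge> 0" unfolding EM_def using B_ge1 cL_nonneg Phi_nonneg by simp

lemma R_expand: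
  "(\<integral>\<omega>. (Pk k \<omega> - Aa) * (Pk k' \<omega> - Aa) \<partial>M)
    = (\<integral>\<omega>. Pk k \<omega> * Pk k' \<omega> \<partial>M) - Aa * (\<integral>\<omega>. Pk k' \<omega> \<partial>M) - Aa * (\<integral>\<omega>. Pk k \<omega> \<partial>M) + Aa\<^sup>2"
proof -
  have "(\<lambda>\<omega>. (Pk k \<omega> - Aa) * (Pk k' \<omega> - Aa)) = (\<lambda>\<omega>. Pk k \<omega> * Pk k' \<omega> - Aa * Pk k' \<omega> - Aa * Pk k \<omega> + Aa * Aa)"
    by (rule ext) (simp add: algebra_simps)
  then show ?thesis using Pk_int(1)[of k] Pk_int(1)[of k'] Pk_int(2)[of k k'] by (simp add: P.prob_space power2_eq_square)
qed

lemma pair_le: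
  assumes adm: "n\<^sub>0 \<le> K0 N" and k: "K0 N \<le> k" "k \<le> k'" "k' \<le> N"
  shows "\<bar>(\<integral>\<omega>. (Pk k \<omega> - Aa) * (Pk k' \<omega> - Aa) \<partial>M) - model k k'\<bar> \<le> Ebd N"
proof -
  define e1 where "e1 = (\<integral>\<omega>. Pk k \<omega> \<partial>M) - Aa"
  define e1' where "e1' = (\<integral>\<omega>. Pk k' \<omega> \<partial>M) - Aa"
  have E1: "\<bar>e1\<bar> \<le> EM N" unfolding e1_def Pk_def Aa_def EM_def
    by (rule est_mean[OF adm k(1)]) (use k in auto)
  have E1': "\<bar>e1'\<bar> \<le> EM N" unfolding e1'_def Pk_def Aa_def EM_def
    by (rule est_mean[OF adm]) (use k in auto)
  have AB: "\<bar>Aa\<bar> \<le> B ^ L" by (rule Aa_bound)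
  have t2: "\<bar>Aa * e1\<bar> \<le> B ^ L * EM N" "\<bar>Aa * e1'\<bar> \<le> B ^ L * EM N"
    using AB E1 E1' by (auto simp: abs_mult intro!: mult_mono)
  have PhiB: "B ^ (2 * L) * (real L * (cL * Phi (gapB N 1))) \<ge> 0"
    using B_ge1 cL_nonneg Phi_nonneg by simp
  show ?thesis
  proof (cases "k = k'")
    case True
    define e2 where "e2 = (\<integral>\<omega>. Pk k \<omega> * Pk k \<omega> \<partial>M) - (\<Prod>j=1..L. \<integral>\<omega>. (X j 0 \<omega>)\<^sup>2 \<partial>M)"
    have E2: "\<bar>e2\<bar> \<le> EM N" unfolding e2_def Pk_def EM_def
      by (rule est_diag[OF adm k(1)]) (use k in auto)
    have pm: "(\<Prod>j=1..L. \<integral>\<omega>. (X j 0 \<omega>)\<^sup>2 \<partial>M) = m2 * Pm2"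
      unfolding m2_def Pm2_def by (rule prod_head[OF l_pos])
    have f0: "fcov 0 = m2 - (a 1)\<^sup>2" unfolding m2_def by (rule fcov_0)
    have mod: "model k k' = m2 * Pm2 - Aa\<^sup>2"
      unfolding model_def Dl_def Aa_sq using True by (simp add: f0 algebra_simps)
    have "(\<integral>\<omega>. (Pk k \<omega> - Aa) * (Pk k' \<omega> - Aa) \<partial>M) - model k k' = e2 - 2 * (Aa * e1)"
      unfolding R_expand mod using True pm unfolding e2_def e1_def by (simp add: algebra_simps power2_eq_square)
    then have "\<bar>(\<integral>\<omega>. (Pk k \<omega> - Aa) * (Pk k' \<omega> - Aa) \<partial>M) - model k k'\<bar> \<le> EM N + 2 * (B ^ L * EM N)"
      using E2 t2 by (simp add: abs_le_iff; linarith)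
    then show ?thesis unfolding Ebd_def using PhiB by (simp add: algebra_simps)
  next
    case False
    then have kk: "k < k'" using k by simp
    define e3 where "e3 = (\<integral>\<omega>. Pk k \<omega> * Pk k' \<omega> \<partial>M) - (fcov (k' - k) + (a 1)\<^sup>2) * P2"
    have E3: "\<bar>e3\<bar> \<le> B ^ (2 * L) * (real L * (cL * Phi (gapB N (k' - k))) + real L * (cL * Phi (gapA N)))"
      using est_off[OF adm k] cross[OF k(2)] unfolding e3_def Pk_def P2_def by simp
    have "Phi (gapB N (k' - k)) \<le> Phi (gapB N 1)"
    proof (rule Phi_mono)
      show "gapB N 1 \<le> gapB N (k' - k)" unfolding gapB_def using kk by (intro mult_right_mono) auto
    qed
    then have "B ^ (2 * L) * (real L * (cL * Phi (gapB N (k' - k)))) \<le> B ^ (2 * L) * (real L * (cL * Phi (gapB N 1)))"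
      using B_ge1 cL_nonneg by (intro mult_left_mono) auto
    then have E3': "\<bar>e3\<bar> \<le> B ^ (2 * L) * (real L * (cL * Phi (gapB N 1))) + EM N"
      using E3 unfolding EM_def by (simp add: distrib_left)
    have mod: "model k k' = P2 * fcov (k' - k)" unfolding model_def using kk by simp
    have "(\<integral>\<omega>. (Pk k \<omega> - Aa) * (Pk k' \<omega> - Aa) \<partial>M) - model k k' = e3 - Aa * e1' - Aa * e1"
      unfolding R_expand mod e3_def e1_def e1'_def using Aa_sq by (simp add: algebra_simps power2_eq_square)
    then have "\<bar>(\<integral>\<omega>. (Pk k \<omega> - Aa) * (Pk k' \<omega> - Aa) \<partial>M) - model k k'\<bar>
        \<le> B ^ (2 * L) * (real L * (cL * Phi (gapB N 1))) + EM N + 2 * (B ^ L * EM N)"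
      using E3' t2 by (simp add: abs_le_iff; linarith)
    then show ?thesis unfolding Ebd_def by (simp add: algebra_simps)
  qed
qed

end

context L35
begin

interpretation P: prob_space M by (rule prob)

lemma pair_err:
  assumes adm: "n\<^sub>0 \<le> K0 N" and k: "K0 N \<le> k" "k \<le> N" and k': "K0 N \<le> k'" "k' \<le> N"
  shows "\<bar>(\<integral>\<omega>. (Pk k \<omega> - Aa) * (Pk k' \<omega> - Aa) \<partial>M) - model k k'\<bar> \<le> Ebd N"
proof (cases "k \<le> k'")
  case True then show ?thesis using pair_le[OF adm k(1) True k'(2)] by simp
next
  case False
  then have "k' \<le> k" by simp
  from pair_le[OF adm k'(1) this k(2)] show ?thesis
    unfolding model_def by (simp add: mult.commute add.commute eq_commute[of k k'])
qed

lemma RR_int: "integrable M (\<lambda>\<omega>. (Pk k \<omega> - Aa) * (Pk k' \<omega> - Aa))"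
proof -
  have "(\<lambda>\<omega>. (Pk k \<omega> - Aa) * (Pk k' \<omega> - Aa)) = (\<lambda>\<omega>. Pk k \<omega> * Pk k' \<omega> - Aa * Pk k' \<omega> - Aa * Pk k \<omega> + Aa * Aa)"
    by (rule ext) (simp add: algebra_simps)
  then show ?thesis using Pk_int(1)[of k] Pk_int(1)[of k'] Pk_int(2)[of k k'] by simp
qed

lemma sq_sum_int:
  "(\<integral>\<omega>. (\<Sum>k\<in>S. Pk k \<omega> - Aa)\<^sup>2 \<partial>M) = (\<Sum>k\<in>S. \<Sum>k'\<in>S. \<integral>\<omega>. (Pk k \<omega> - Aa) * (Pk k' \<omega> - Aa) \<partial>M)"
proof -
  have "(\<lambda>\<omega>. (\<Sum>k\<in>S. Pk k \<omega> - Aa)\<^sup>2) = (\<lambda>\<omega>. \<Sum>k\<in>S. \<Sum>k'\<in>S. (Pk k \<omega> - Aa) * (Pk k' \<omega> - Aa))"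
    by (rule ext) (simp add: power2_eq_square sum_product)
  then have "(\<integral>\<omega>. (\<Sum>k\<in>S. Pk k \<omega> - Aa)\<^sup>2 \<partial>M) = (\<Sum>k\<in>S. \<integral>\<omega>. (\<Sum>k'\<in>S. (Pk k \<omega> - Aa) * (Pk k' \<omega> - Aa)) \<partial>M)"
    using RR_int by (simp add: integral_sum integrable_sum)
  also have "\<dots> = (\<Sum>k\<in>S. \<Sum>k'\<in>S. \<integral>\<omega>. (Pk k \<omega> - Aa) * (Pk k' \<omega> - Aa) \<partial>M)"
    using RR_int by (simp add: integral_sum)
  finally show ?thesis .
qed

lemma sigma_eq: "sigmasq M L X r = Dl + P2 * (fcov 0 + 2 * (\<Sum>n. fcov (Suc n)))"
proof -
  have t: "(\<lambda>n. fcov (Suc n)) = (\<lambda>n. \<integral>\<omega>. (X 1 (r * Suc n) \<omega> - mean0 M X 1) * (X 1 0 \<omega> - mean0 M X 1) \<partial>M)"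
    by (simp add: fcov_def a_def)
  have s1: "sigma1sq M X r = fcov 0 + 2 * (\<Sum>n. fcov (Suc n))"
    unfolding sigma1sq_def fcov_0 t a_def by simp
  show ?thesis unfolding sigmasq_def s1 Dl_def m2_def Pm2_def P2_def a_def by (simp add: algebra_simps)
qed

lemma fcov_geo: "\<bar>fcov d\<bar> \<le> (cL * (exp \<kappa> / \<kappa>)) * exp (- \<kappa> / 3) ^ d"
proof -
  have "exp (- (\<kappa> / 3) * real d) = exp (- \<kappa> / 3) ^ d"
    by (simp add: exp_of_nat_mult[symmetric] mult.commute)
  then show ?thesis using fcov_bound[of d] unfolding Phi_def by (simp add: mult.assoc)
qed

lemma P2_bound: "\<bar>P2\<bar> \<le> B ^ (2 * L)"
proof -
  have "\<bar>P2\<bar> = (\<Prod>j=2..L. \<bar>a j\<bar> ^ 2)" unfolding P2_def by (simp add: abs_prod power_abs)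
  also have "\<dots> \<le> (\<Prod>j=2..L. B ^ 2)"
  proof (rule prod_mono)
    fix j assume "j \<in> {2..L}"
    then have "\<bar>a j\<bar> \<le> B" using a_bound by auto
    then have "\<bar>a j\<bar> ^ 2 \<le> B ^ 2" by (intro power_mono) auto
    then show "0 \<le> \<bar>a j\<bar> ^ 2 \<and> \<bar>a j\<bar> ^ 2 \<le> B ^ 2" by simp
  qed
  also have "\<dots> = B ^ (2 * (L - 1))" by (simp add: power_mult)
  also have "\<dots> \<le> B ^ (2 * L)" using B_ge1 by (intro power_increasing) auto
  finally show ?thesis .
qed

lemma model_total:
  "\<bar>(\<Sum>k=m+1..n. \<Sum>k'=m+1..n. model k k') - real (n - m) * sigmasq M L X r\<bar>
     \<le> B ^ (2 * L) * (2 * (cL * (exp \<kappa> / \<kappa>)) / (1 - exp (- \<kappa> / 3)) ^ 2)" if "m \<le> n" for m n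
proof -
  define T where "T = (\<Sum>n. fcov (Suc n))"
  have nn: "n = m + (n - m)" using that by simp
  have ms: "\<bar>(\<Sum>k=m+1..m+(n-m). \<Sum>k'=m+1..m+(n-m). fcov ((k - k') + (k' - k))) - real (n - m) * (fcov 0 + 2 * T)\<bar>
     \<le> 2 * (cL * (exp \<kappa> / \<kappa>)) / (1 - exp (- \<kappa> / 3)) ^ 2"
    unfolding T_def by (rule model_sum[OF fcov_geo]) (use C1(1) in auto)
  have dsum: "(\<Sum>k=m+1..n. \<Sum>k'=m+1..n. (if k = k' then Dl else 0)) = real (n - m) * Dl"
    by (simp add: sum.delta)
  have "(\<Sum>k=m+1..n. \<Sum>k'=m+1..n. model k k')
      = P2 * (\<Sum>k=m+1..n. \<Sum>k'=m+1..n. fcov ((k - k') + (k' - k))) + real (n - m) * Dl"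
    unfolding model_def dsum[symmetric] by (simp add: sum.distrib sum_distrib_left)
  then have eq: "(\<Sum>k=m+1..n. \<Sum>k'=m+1..n. model k k') - real (n - m) * sigmasq M L X r
      = P2 * ((\<Sum>k=m+1..m+(n-m). \<Sum>k'=m+1..m+(n-m). fcov ((k - k') + (k' - k))) - real (n - m) * (fcov 0 + 2 * T))"
    unfolding sigma_eq T_def using nn by (simp add: algebra_simps)
  have "\<bar>P2 * ((\<Sum>k=m+1..m+(n-m). \<Sum>k'=m+1..m+(n-m). fcov ((k - k') + (k' - k))) - real (n - m) * (fcov 0 + 2 * T))\<bar>
      \<le> B ^ (2 * L) * (2 * (cL * (exp \<kappa> / \<kappa>)) / (1 - exp (- \<kappa> / 3)) ^ 2)"
    unfolding abs_mult by (rule mult_mono[OF P2_bound ms]) (use B_ge1 in auto)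
  then show ?thesis unfolding eq .
qed

end

context L35
begin

interpretation P: prob_space M by (rule prob)

definition "cs = min (2 powr \<gamma> - 1) (1 / 2 powr \<gamma>)"
definition "dl = (1 - \<gamma>) * \<gamma>"

lemma cs_pos: "cs > 0" unfolding cs_def using gamma by (simp add: powr_gt_zero)
lemma dl_pos: "dl > 0" "dl \<le> 1" unfolding dl_def using gamma by (auto simp: mult_le_one)

lemma gap_lower:
  assumes adm: "n\<^sub>0 \<le> K0 N"
  shows "cs * real N powr dl \<le> gapA N" "cs * real N powr dl \<le> gapB N 1"
proof -
  have F: "1 \<le> N" "K0 N \<le> N" "2 \<le> real N powr (1 - \<gamma>)" "real N powr (1 - \<gamma>) \<le> 2 * real (K0 N)"
    using K0_facts[OF adm] by auto
  have N2: "2 \<le> real N" using F(2) adm n0 by simp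
  have Nd: "real N powr dl \<le> real N"
  proof -
    have "real N powr dl \<le> real N powr 1" using F(1) dl_pos by (intro powr_mono) auto
    then show ?thesis using F(1) by simp
  qed
  have "2 powr \<gamma> \<le> real N powr \<gamma>" using N2 gamma by (intro powr_mono2) auto
  then have "cs \<le> real N powr \<gamma> - 1" unfolding cs_def by linarith
  then have "cs * real N \<le> (real N powr \<gamma> - 1) * real N" using F(1) by (intro mult_right_mono) auto
  moreover have "cs * real N powr dl \<le> cs * real N" using Nd cs_pos by simp
  ultimately show "cs * real N powr dl \<le> gapA N" unfolding gapA_def by (simp add: mult.commute)
  have "(real N powr (1 - \<gamma>) / 2) powr \<gamma> \<le> real (K0 N) powr \<gamma>"
    using F(4) gamma by (intro powr_mono2) auto
  moreover have "(real N powr (1 - \<gamma>) / 2) powr \<gamma> = real N powr dl / 2 powr \<gamma>"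
    unfolding dl_def by (simp add: powr_divide powr_powr)
  moreover have "cs * real N powr dl \<le> real N powr dl / 2 powr \<gamma>"
  proof -
    have "cs \<le> 1 / 2 powr \<gamma>" unfolding cs_def by simp
    then have "cs * real N powr dl \<le> (1 / 2 powr \<gamma>) * real N powr dl" by (intro mult_right_mono) auto
    then show ?thesis by simp
  qed
  ultimately show "cs * real N powr dl \<le> gapB N 1" unfolding gapB_def by simp
qed

lemma main:
  "\<exists>C>0. \<forall>N n m. N \<ge> n \<and> n > m \<and> m \<ge> nat \<lfloor>real N powr (1 - \<gamma>)\<rfloor>
              \<and> nat \<lfloor>real N powr (1 - \<gamma>)\<rfloor> \<ge> n\<^sub>0 \<longrightarrow>
           \<bar>(\<integral>\<omega>. (\<Sum>k=m+1..n. Rproc M L X q k \<omega>)\<^sup>2 \<partial>M) - real (n - m) * sigmasq M L X r\<bar> \<le> C"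
proof -
  obtain Ca where Ca: "\<And>x. x \<ge> 0 \<Longrightarrow> x ^ 2 * exp (- (\<kappa> / 3 * cs) * x powr dl) \<le> Ca"
    using asy_bound[of "\<kappa> / 3 * cs" dl] cs_pos dl_pos C1(1) by auto
  define c0 where "c0 = exp \<kappa> / \<kappa>"
  have c00: "c0 \<ge> 0" unfolding c0_def using C1(1) by simp
  have NPhi: "real N ^ 2 * Phi G \<le> c0 * Ca" if adm: "n\<^sub>0 \<le> K0 N" and G: "cs * real N powr dl \<le> G" for N G
  proof -
    have "Phi G \<le> Phi (cs * real N powr dl)" by (rule Phi_mono[OF G])
    then have "real N ^ 2 * Phi G \<le> real N ^ 2 * Phi (cs * real N powr dl)" by (simp add: mult_left_mono)
    also have "\<dots> = c0 * (real N ^ 2 * exp (- (\<kappa> / 3 * cs) * real N powr dl))"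
      unfolding Phi_def c0_def by (simp add: algebra_simps)
    also have "\<dots> \<le> c0 * Ca" using Ca[of "real N"] c00 by (intro mult_left_mono) auto
    finally show ?thesis .
  qed
  define Q where "Q = B ^ (2 * L) * (real L * cL)"
  have Q0: "Q \<ge> 0" unfolding Q_def using B_ge1 cL_nonneg by simp
  define CM where "CM = B ^ (2 * L) * (2 * (cL * (exp \<kappa> / \<kappa>)) / (1 - exp (- \<kappa> / 3)) ^ 2)"
  define C where "C = (1 + 2 * B ^ L) * (Q * (c0 * Ca)) + Q * (c0 * Ca) + CM"
  show ?thesis
  proof (intro exI[where x="max C 1"] conjI allI impI)
    show "max C 1 > 0" by simp
    fix N n m assume H: "N \<ge> n \<and> n > m \<and> m \<ge> nat \<lfloor>real N powr (1 - \<gamma>)\<rfloor> \<and> nat \<lfloor>real N powr (1 - \<gamma>)\<rfloor> \<ge> n\<^sub>0"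
    have adm: "n\<^sub>0 \<le> K0 N" and mK: "K0 N \<le> m" and nN: "n \<le> N" and mn: "m < n"
      using H unfolding K0_def by auto
    define S where "S = {m+1..n}"
    have kS: "K0 N \<le> k \<and> k \<le> N" if "k \<in> S" for k using that mK nN unfolding S_def by auto
    have Rp: "Rproc M L X q k \<omega> = Pk k \<omega> - Aa" for k \<omega>
      unfolding Rproc_def Pk_def Aa_def a_def ..
    have I: "(\<integral>\<omega>. (\<Sum>k=m+1..n. Rproc M L X q k \<omega>)\<^sup>2 \<partial>M)
        = (\<Sum>k\<in>S. \<Sum>k'\<in>S. \<integral>\<omega>. (Pk k \<omega> - Aa) * (Pk k' \<omega> - Aa) \<partial>M)"
      unfolding Rp S_def by (rule sq_sum_int)
    define E where "E = (\<lambda>k k'. (\<integral>\<omega>. (Pk k \<omega> - Aa) * (Pk k' \<omega> - Aa) \<partial>M) - model k k')"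
    have split: "(\<integral>\<omega>. (\<Sum>k=m+1..n. Rproc M L X q k \<omega>)\<^sup>2 \<partial>M) - real (n - m) * sigmasq M L X r
        = (\<Sum>k\<in>S. \<Sum>k'\<in>S. E k k') + ((\<Sum>k=m+1..n. \<Sum>k'=m+1..n. model k k') - real (n - m) * sigmasq M L X r)"
      unfolding I E_def S_def by (simp add: sum_subtractf)
    have Eb: "\<bar>\<Sum>k\<in>S. \<Sum>k'\<in>S. E k k'\<bar> \<le> real N ^ 2 * Ebd N"
    proof -
      have "\<bar>\<Sum>k\<in>S. \<Sum>k'\<in>S. E k k'\<bar> \<le> (\<Sum>k\<in>S. \<Sum>k'\<in>S. \<bar>E k k'\<bar>)"
        by (rule order_trans[OF sum_abs]) (intro sum_mono sum_abs)
      also have "\<dots> \<le> (\<Sum>k\<in>S. \<Sum>k'\<in>S. Ebd N)"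
        by (intro sum_mono) (use kS pair_err[OF adm] in \<open>auto simp: E_def\<close>)
      also have "\<dots> = real (card S) ^ 2 * Ebd N" by (simp add: power2_eq_square)
      also have "\<dots> \<le> real N ^ 2 * Ebd N"
      proof -
        have "card S \<le> N" unfolding S_def using nN by simp
        moreover have "Ebd N \<ge> 0" unfolding Ebd_def using EM_nonneg B_ge1 cL_nonneg Phi_nonneg by simp
        ultimately show ?thesis by (intro mult_right_mono power_mono) auto
      qed
      finally show ?thesis .
    qed
    have NE: "real N ^ 2 * Ebd N \<le> (1 + 2 * B ^ L) * (Q * (c0 * Ca)) + Q * (c0 * Ca)"
    proof -
      have a1: "real N ^ 2 * Phi (gapA N) \<le> c0 * Ca" by (rule NPhi[OF adm gap_lower(1)[OF adm]])
      have a2: "real N ^ 2 * Phi (gapB N 1) \<le> c0 * Ca" by (rule NPhi[OF adm gap_lower(2)[OF adm]])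
      have "real N ^ 2 * Ebd N = (1 + 2 * B ^ L) * (Q * (real N ^ 2 * Phi (gapA N))) + Q * (real N ^ 2 * Phi (gapB N 1))"
        unfolding Ebd_def EM_def Q_def by (simp add: algebra_simps)
      also have "\<dots> \<le> (1 + 2 * B ^ L) * (Q * (c0 * Ca)) + Q * (c0 * Ca)"
        using a1 a2 Q0 B_ge1 by (intro add_mono mult_left_mono) auto
      finally show ?thesis .
    qed
    have MT: "\<bar>(\<Sum>k=m+1..n. \<Sum>k'=m+1..n. model k k') - real (n - m) * sigmasq M L X r\<bar> \<le> CM"
      unfolding CM_def using model_total mn by simp
    have "\<bar>(\<integral>\<omega>. (\<Sum>k=m+1..n. Rproc M L X q k \<omega>)\<^sup>2 \<partial>M) - real (n - m) * sigmasq M L X r\<bar> \<le> C"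
      unfolding split C_def using Eb NE MT abs_triangle_ineq
      by (smt (verit))
    then show "\<bar>(\<integral>\<omega>. (\<Sum>k=m+1..n. Rproc M L X q k \<omega>)\<^sup>2 \<partial>M) - real (n - m) * sigmasq M L X r\<bar> \<le> max C 1"
      by simp
  qed
qed

end

theorem lemma3p5:
  fixes M :: "'a measure"
    and L :: nat
    and X :: "nat \<Rightarrow> nat \<Rightarrow> 'a \<Rightarrow> real"
    and q :: "nat \<Rightarrow> nat \<Rightarrow> nat"
    and F :: "ereal \<Rightarrow> ereal \<Rightarrow> 'a measure"
    and D \<kappa> \<gamma> :: real
    and r p n\<^sub>0 :: nat
  assumes prob: "prob_space M"
    and l_pos: "L \<ge> 1"
    and X_meas: "\<And>j n. j \<in> {1..L} \<Longrightarrow> X j n \<in> borel_measurable M"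
    and X_stat: "\<And>j. j \<in> {1..L} \<Longrightarrow> stationary_proc M (X j)"
    and X_bdd: "\<And>j n. j \<in> {1..L} \<Longrightarrow> AE \<omega> in M. \<bar>X j n \<omega>\<bar> \<le> D"
    and F_sub: "\<And>k l. subalgebra M (F k l)"
    and F_mono: "\<And>k l k' l'. k' \<le> k \<Longrightarrow> l \<le> l' \<Longrightarrow> sets (F k l) \<subseteq> sets (F k' l')"
    and C1: "\<kappa> > 0" "\<And>n. alpha_mix M F n + Max ((\<lambda>j. beta_approx M F (X j) n) ` {1..L})
                              \<le> exp (- \<kappa> * real n) / \<kappa>"
    and C2: "r > 0" "\<And>n. q 1 n = r * n + p"
    and gamma: "0 < \<gamma>" "\<gamma> < 1" and n0: "n\<^sub>0 > 1"
    and C3: "\<And>j n. j \<in> {2..L} \<Longrightarrow> n \<ge> n\<^sub>0 \<Longrightarrow>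
               real (q j (n + 1)) \<ge> real (q j n) + real n powr \<gamma>"
    and C4: "\<And>j n. j \<in> {1..<L} \<Longrightarrow> n \<ge> n\<^sub>0 \<Longrightarrow>
               real (q (j + 1) (nat \<lfloor>real n powr (1 - \<gamma>)\<rfloor>)) \<ge> real (q j n) * real n powr \<gamma>"
  shows "\<exists>C>0. \<forall>N n m. N \<ge> n \<and> n > m \<and> m \<ge> nat \<lfloor>real N powr (1 - \<gamma>)\<rfloor>
              \<and> nat \<lfloor>real N powr (1 - \<gamma>)\<rfloor> \<ge> n\<^sub>0 \<longrightarrow>
           \<bar>(\<integral>\<omega>. (\<Sum>k=m+1..n. Rproc M L X q k \<omega>)\<^sup>2 \<partial>M) - real (n - m) * sigmasq M L X r\<bar> \<le> C"
proof -
  interpret L35 M L X q F D \<kappa> \<gamma> r p n\<^sub>0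
    by (rule L35.intro) (fact prob l_pos X_meas X_stat X_bdd F_sub F_mono C1 C2 gamma n0 C3 C4)+
  show ?thesis by (rule main)
qed

end
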